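(* Let $n\ge1$ and let $\gamma\in PSL(n+1,\mathbb{C})$ have a lift $\widetilde\gamma$ equal to the $(n+1)\times(n+1)$ Jordan block with eigenvalue $1$ (ones on the diagonal and superdiagonal, so $\widetilde\gamma e_1=e_1$ and $\widetilde\gamma e_i=e_i+e_{i-1}$ for $i\ge2$). Let $\ell\subset\mathbb{P}^n_{\mathbb{C}}$ be a hyperplane not containing $[e_1]$. Then: (1) the projective action induced by $\bigwedge^n\widetilde\gamma$ on $\mathbb{P}(\bigwedge^n\mathbb{C}^{n+1})$ has a unique fixed point; (2) $\gamma^m(\ell)\to\langle\langle[e_1],\dots,[e_n]\rangle\rangle$ as $m\to\infty$ (in the Hausdorff topology on closed subsets of $\mathbb{P}^n_{\mathbb{C}}$); (3) $\Lambda_{Kul}(\langle\gamma\rangle)=\langle\langle[e_1],\dots,[e_n]\rangle\rangle$.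
   Context: $e_1,\dots,e_{n+1}$ is the standard basis of $\mathbb{C}^{n+1}$; $\langle\langle P\rangle\rangle$ is the smallest projective subspace containing $P$. For $\Gamma\subset PSL(n+1,\mathbb{C})$: $\Lambda(\Gamma)$ is the closure of the union of cluster points of orbits $\Gamma z$ (limits of $g_mz$, $g_m$ pairwise distinct); $L_2(\Gamma)$ is the closure of the union over compact $K\subset\mathbb{P}^n_{\mathbb{C}}\setminus\Lambda(\Gamma)$ of cluster points of $\Gamma K$ (limits of $g_mk_m$, $g_m$ pairwise distinct, $k_m\in K$); $\Lambda_{Kul}(\Gamma)=\Lambda(\Gamma)\cup L_2(\Gamma)$. *)

theory Defs
  imports "HOL-Analysis.Analysis"
begin

text \<open>Vectors of C^I are functions from an index type to complex numbers vanishing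
  outside the finite index set I. C^(n+1) uses I = {1..n+1}, so that e k is the
  k-th standard basis vector e_k.\<close>

definition cvecs :: "'i set \<Rightarrow> ('i \<Rightarrow> complex) set" where
  "cvecs I = {v. \<forall>i. i \<notin> I \<longrightarrow> v i = 0}"

definition e :: "nat \<Rightarrow> nat \<Rightarrow> complex" where
  "e k = (\<lambda>i. if i = k then 1 else 0)"

definition pt :: "('i \<Rightarrow> complex) \<Rightarrow> ('i \<Rightarrow> complex) set" where
  "pt v = {(\<lambda>i. c * v i) | c. c \<noteq> 0}"

definition PS :: "'i set \<Rightarrow> ('i \<Rightarrow> complex) set set" where
  "PS I = {pt v | v. v \<in> cvecs I \<and> v \<noteq> (\<lambda>i. 0)}"

definition mulv :: "'i set \<Rightarrow> ('i \<Rightarrow> 'i \<Rightarrow> complex) \<Rightarrow> ('i \<Rightarrow> complex) \<Rightarrow> ('i \<Rightarrow> complex)" where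
  "mulv I A v = (\<lambda>i. if i \<in> I then (\<Sum>j\<in>I. A i j * v j) else 0)"

definition pmap :: "'i set \<Rightarrow> ('i \<Rightarrow> 'i \<Rightarrow> complex) \<Rightarrow> ('i \<Rightarrow> complex) set \<Rightarrow> ('i \<Rightarrow> complex) set" where
  "pmap I A p = pt (mulv I A (SOME v. v \<in> p))"

definition cspan :: "('i \<Rightarrow> complex) set \<Rightarrow> ('i \<Rightarrow> complex) set" where
  "cspan S = {v. \<exists>F c. finite F \<and> F \<subseteq> S \<and> v = (\<lambda>i. \<Sum>w\<in>F. c w * w i)}"

definition pspan :: "'i set \<Rightarrow> ('i \<Rightarrow> complex) set set \<Rightarrow> ('i \<Rightarrow> complex) set set" where
  "pspan I P = {pt v | v. v \<in> cvecs I \<and> v \<noteq> (\<lambda>i. 0) \<and> v \<in> cspan (\<Union>P)}"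

definition hyperplane :: "'i set \<Rightarrow> ('i \<Rightarrow> complex) \<Rightarrow> ('i \<Rightarrow> complex) set set" where
  "hyperplane I a = {p \<in> PS I. \<forall>v\<in>p. (\<Sum>i\<in>I. a i * v i) = 0}"

text \<open>Distance of [u],[w]: Frobenius distance of the orthogonal projections onto the lines
  (a metric inducing the standard topology of P(C^I)).\<close>
definition nsq :: "'i set \<Rightarrow> ('i \<Rightarrow> complex) \<Rightarrow> complex" where
  "nsq I u = of_real (\<Sum>i\<in>I. (cmod (u i))\<^sup>2)"

definition proj_entry :: "'i set \<Rightarrow> ('i \<Rightarrow> complex) \<Rightarrow> 'i \<Rightarrow> 'i \<Rightarrow> complex" where
  "proj_entry I u i j = u i * cnj (u j) / nsq I u"

definition pdist :: "'i set \<Rightarrow> ('i \<Rightarrow> complex) set \<Rightarrow> ('i \<Rightarrow> complex) set \<Rightarrow> real" where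
  "pdist I p q = (let u = (SOME v. v \<in> p); w = (SOME v. v \<in> q) in
      sqrt (\<Sum>i\<in>I. \<Sum>j\<in>I. (cmod (proj_entry I u i j - proj_entry I w i j))\<^sup>2))"

definition hdist :: "'i set \<Rightarrow> ('i \<Rightarrow> complex) set set \<Rightarrow> ('i \<Rightarrow> complex) set set \<Rightarrow> real" where
  "hdist I A B = max (SUP a\<in>A. INF b\<in>B. pdist I a b) (SUP b\<in>B. INF a\<in>A. pdist I a b)"

definition mconv :: "('a \<Rightarrow> 'a \<Rightarrow> real) \<Rightarrow> (nat \<Rightarrow> 'a) \<Rightarrow> 'a \<Rightarrow> bool" where
  "mconv d x y \<longleftrightarrow> (\<lambda>m. d (x m) y) \<longlonglongrightarrow> 0"

definition mclos :: "'a set \<Rightarrow> ('a \<Rightarrow> 'a \<Rightarrow> real) \<Rightarrow> 'a set \<Rightarrow> 'a set" where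
  "mclos P d S = {y \<in> P. \<exists>s. (\<forall>m. s m \<in> S) \<and> mconv d s y}"

definition mcompact :: "'a set \<Rightarrow> ('a \<Rightarrow> 'a \<Rightarrow> real) \<Rightarrow> 'a set \<Rightarrow> bool" where
  "mcompact P d K \<longleftrightarrow> K \<subseteq> P \<and>
     (\<forall>s. (\<forall>m. s m \<in> K) \<longrightarrow> (\<exists>(r::nat \<Rightarrow> nat) y. strict_mono r \<and> y \<in> K \<and> mconv d (s \<circ> r) y))"

definition LimLambda :: "'a set \<Rightarrow> ('a \<Rightarrow> 'a \<Rightarrow> real) \<Rightarrow> ('a \<Rightarrow> 'a) set \<Rightarrow> 'a set" where
  "LimLambda P d \<Gamma> = mclos P d
     {y \<in> P. \<exists>z\<in>P. \<exists>g. inj g \<and> (\<forall>m. g m \<in> \<Gamma>) \<and> mconv d (\<lambda>m. g m z) y}"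

definition LimL2 :: "'a set \<Rightarrow> ('a \<Rightarrow> 'a \<Rightarrow> real) \<Rightarrow> ('a \<Rightarrow> 'a) set \<Rightarrow> 'a set" where
  "LimL2 P d \<Gamma> = mclos P d
     {y \<in> P. \<exists>K. mcompact P d K \<and> K \<subseteq> P - LimLambda P d \<Gamma> \<and>
        (\<exists>g k. inj g \<and> (\<forall>m. g m \<in> \<Gamma>) \<and> (\<forall>m. k m \<in> K) \<and> mconv d (\<lambda>m. g m (k m)) y)}"

definition KulLim :: "'a set \<Rightarrow> ('a \<Rightarrow> 'a \<Rightarrow> real) \<Rightarrow> ('a \<Rightarrow> 'a) set \<Rightarrow> 'a set" where
  "KulLim P d \<Gamma> = LimLambda P d \<Gamma> \<union> LimL2 P d \<Gamma>"

definition zpow :: "'a set \<Rightarrow> ('a \<Rightarrow> 'a) \<Rightarrow> int \<Rightarrow> 'a \<Rightarrow> 'a" where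
  "zpow P f k = (if k \<ge> 0 then f ^^ nat k else (inv_into P f) ^^ nat (- k))"

definition cyclic :: "'a set \<Rightarrow> ('a \<Rightarrow> 'a) \<Rightarrow> ('a \<Rightarrow> 'a) set" where
  "cyclic P f = {restrict (zpow P f k) P | k. True}"

definition jordan1 :: "nat \<Rightarrow> nat \<Rightarrow> nat \<Rightarrow> complex" where
  "jordan1 n i j = (if i \<in> {1..n+1} \<and> j \<in> {1..n+1} \<and> (j = i \<or> j = Suc i) then 1 else 0)"

text \<open>Index set of the standard basis e_S of the n-th exterior power of C^(n+1).\<close>
definition nsubsets :: "nat \<Rightarrow> nat set set" where
  "nsubsets n = {S. S \<subseteq> {1..n+1} \<and> card S = n}"

definition ldet :: "nat \<Rightarrow> (nat \<Rightarrow> nat \<Rightarrow> complex) \<Rightarrow> complex" where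
  "ldet k M = (\<Sum>p | p permutes {..<k}. of_int (sign p) * (\<Prod>i<k. M i (p i)))"

text \<open>Matrix of the n-th exterior power of A in the basis e_S (S increasing):
  entries are the n x n minors of A (n-th compound matrix).\<close>
definition compound :: "nat \<Rightarrow> (nat \<Rightarrow> nat \<Rightarrow> complex) \<Rightarrow> nat set \<Rightarrow> nat set \<Rightarrow> complex" where
  "compound n A S T = ldet n (\<lambda>a b. A (sorted_list_of_set S ! a) (sorted_list_of_set T ! b))"

end

theory Submission
  imports Defs
begin

lemma pt_self: "v \<in> pt v"
  unfolding pt_def by (rule CollectI) (rule exI[of _ 1], simp)

lemma pt_eqD: "pt u = pt w \<Longrightarrow> \<exists>c. c \<noteq> 0 \<and> u = (\<lambda>i. c * w i)"
  using pt_self[of u] unfolding pt_def by auto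

lemma pt_scale: "c \<noteq> 0 \<Longrightarrow> pt (\<lambda>i. c * v i) = pt v"
proof -
  assume c: "c \<noteq> 0"
  show ?thesis unfolding pt_def
  proof (intro equalityI subsetI)
    fix x assume "x \<in> {\<lambda>i. d * (c * v i) |d. d \<noteq> 0}"
    then obtain d where "d \<noteq> 0" "x = (\<lambda>i. d * (c * v i))" by auto
    then show "x \<in> {\<lambda>i. d * v i |d. d \<noteq> 0}" using c by (intro CollectI exI[of _ "d*c"]) (auto simp: mult.assoc)
  next
    fix x assume "x \<in> {\<lambda>i. d * v i |d. d \<noteq> 0}"
    then obtain d where "d \<noteq> 0" "x = (\<lambda>i. d * v i)" by auto
    then show "x \<in> {\<lambda>i. d * (c * v i) |d. d \<noteq> 0}" using c
      by (intro CollectI exI[of _ "d/c"]) (auto simp: mult.assoc)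
  qed
qed

lemma pt_eq_iff: "pt u = pt w \<longleftrightarrow> (\<exists>c. c \<noteq> 0 \<and> u = (\<lambda>i. c * w i))"
  using pt_eqD pt_scale by metis

lemma some_pt: "\<exists>c. c \<noteq> 0 \<and> (SOME x. x \<in> pt v) = (\<lambda>i. c * v i)"
proof -
  have "(SOME x. x \<in> pt v) \<in> pt v" by (rule someI[of _ v], rule pt_self)
  then show ?thesis unfolding pt_def by auto
qed

definition nn :: "'i set \<Rightarrow> ('i \<Rightarrow> complex) \<Rightarrow> real" where
  "nn I u = (\<Sum>i\<in>I. (cmod (u i))\<^sup>2)"

lemma nn_nonneg: "nn I u \<ge> 0" unfolding nn_def by (simp add: sum_nonneg)

lemma nn_scale: "nn I (\<lambda>i. c * u i) = (cmod c)^2 * nn I u"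
  unfolding nn_def by (simp add: norm_mult power_mult_distrib sum_distrib_left)

lemma nsq_nn: "nsq I u = of_real (nn I u)" unfolding nsq_def nn_def by simp

lemma nn_pos: "finite I \<Longrightarrow> u \<in> cvecs I \<Longrightarrow> u \<noteq> (\<lambda>i. 0) \<Longrightarrow> nn I u > 0"
proof -
  assume f: "finite I" and u: "u \<in> cvecs I" "u \<noteq> (\<lambda>i. 0)"
  then obtain j where j: "u j \<noteq> 0" by auto
  then have jI: "j \<in> I" using u unfolding cvecs_def by auto
  have "(cmod (u j))^2 \<le> nn I u" unfolding nn_def
    by (rule member_le_sum[OF jI _ f]) simp
  moreover have "(cmod (u j))^2 > 0" using j by simp
  ultimately show ?thesis by linarith
qed

lemma nn_zero_iff: "finite I \<Longrightarrow> u \<in> cvecs I \<Longrightarrow> nn I u = 0 \<longleftrightarrow> u = (\<lambda>i. 0)"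
  using nn_pos[of I u] by (cases "u = (\<lambda>i. 0)") (auto simp: nn_def)

lemma proj_entry_scale: "c \<noteq> 0 \<Longrightarrow> proj_entry I (\<lambda>i. c * u i) i j = proj_entry I u i j"
proof -
  assume c: "c \<noteq> 0"
  have cc: "c * cnj c \<noteq> 0" using c by simp
  have "nsq I (\<lambda>i. c*u i) = (c * cnj c) * nsq I u" unfolding nsq_nn nn_scale
    by (simp only: of_real_mult complex_norm_square)
  then show ?thesis unfolding proj_entry_def using cc by (simp add: field_simps)
qed

definition Dv :: "'i set \<Rightarrow> ('i \<Rightarrow> complex) \<Rightarrow> ('i \<Rightarrow> complex) \<Rightarrow> real" where
  "Dv I u w = sqrt (\<Sum>i\<in>I. \<Sum>j\<in>I. (cmod (proj_entry I u i j - proj_entry I w i j))\<^sup>2)"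

lemma Dv_scale: "c \<noteq> 0 \<Longrightarrow> d \<noteq> 0 \<Longrightarrow> Dv I (\<lambda>i. c * u i) (\<lambda>i. d * w i) = Dv I u w"
  unfolding Dv_def by (simp add: proj_entry_scale)

lemma pdist_pt: "pdist I (pt u) (pt w) = Dv I u w"
proof -
  obtain c where c: "c \<noteq> 0" "(SOME x. x \<in> pt u) = (\<lambda>i. c * u i)" using some_pt by blast
  obtain d where d: "d \<noteq> 0" "(SOME x. x \<in> pt w) = (\<lambda>i. d * w i)" using some_pt by blast
  show ?thesis unfolding pdist_def Let_def c(2) d(2) Dv_scale[OF c(1) d(1)] Dv_def[symmetric] ..
qed

lemma Dv_sym: "Dv I u w = Dv I w u"
  unfolding Dv_def by (simp add: norm_minus_commute)

lemma Dv_nonneg: "Dv I u w \<ge> 0" unfolding Dv_def by (simp add: sum_nonneg)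

lemma Dv_self: "Dv I u u = 0" unfolding Dv_def by simp

definition qq :: "'i set \<Rightarrow> 'i \<Rightarrow> ('i \<Rightarrow> complex) \<Rightarrow> real" where
  "qq I i u = (cmod (u i))^2 / nn I u"

lemma proj_entry_diag: "proj_entry I u i i = of_real (qq I i u)"
  unfolding proj_entry_def qq_def nsq_nn by (simp add: complex_norm_square[symmetric])

lemma qq_lip: "finite I \<Longrightarrow> i \<in> I \<Longrightarrow> \<bar>qq I i u - qq I i w\<bar> \<le> Dv I u w"
proof -
  assume f: "finite I" and i: "i \<in> I"
  let ?f = "\<lambda>i j. (cmod (proj_entry I u i j - proj_entry I w i j))\<^sup>2"
  have "?f i i \<le> (\<Sum>j\<in>I. ?f i j)" by (rule member_le_sum[OF i _ f]) simp
  also have "\<dots> \<le> (\<Sum>i\<in>I. \<Sum>j\<in>I. ?f i j)" by (rule member_le_sum[OF i _ f]) (simp add: sum_nonneg)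
  finally have "cmod (proj_entry I u i i - proj_entry I w i i) \<le> Dv I u w" unfolding Dv_def
    by (intro real_le_rsqrt)
  then show ?thesis unfolding proj_entry_diag by (simp flip: of_real_diff)
qed

lemma qq_scale: "c \<noteq> 0 \<Longrightarrow> qq I i (\<lambda>i. c * u i) = qq I i u"
  unfolding qq_def nn_scale by (simp add: norm_mult power_mult_distrib)

lemma qq_le1: "finite I \<Longrightarrow> i \<in> I \<Longrightarrow> qq I i u \<le> 1"
proof -
  assume f: "finite I" and i: "i \<in> I"
  have "(cmod (u i))^2 \<le> nn I u" unfolding nn_def by (rule member_le_sum[OF i _ f]) simp
  then show ?thesis unfolding qq_def using nn_nonneg[of I u] by (cases "nn I u = 0") (auto simp: divide_le_eq_1)
qed

lemma qq_nonneg: "qq I i u \<ge> 0" unfolding qq_def by (simp add: nn_nonneg)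

definition nrm :: "'i set \<Rightarrow> ('i \<Rightarrow> complex) \<Rightarrow> real" where
  "nrm I u = sqrt (nn I u)"

lemma nrm_L2: "nrm I u = L2_set (\<lambda>i. cmod (u i)) I"
  unfolding nrm_def nn_def L2_set_def ..

lemma nrm_nonneg: "nrm I u \<ge> 0" unfolding nrm_def by (simp add: nn_nonneg)

lemma nrm_triangle: "nrm I (\<lambda>i. f i + g i) \<le> nrm I f + nrm I g"
proof -
  have "nrm I (\<lambda>i. f i + g i) \<le> L2_set (\<lambda>i. cmod (f i) + cmod (g i)) I"
    unfolding nrm_L2 by (rule L2_set_mono) (auto intro: norm_triangle_ineq)
  also have "\<dots> \<le> nrm I f + nrm I g" unfolding nrm_L2
    by (rule L2_set_triangle_ineq)
  finally show ?thesis .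
qed

lemma nrm_scale: "nrm I (\<lambda>i. c * u i) = cmod c * nrm I u"
  unfolding nrm_def nn_scale by (simp add: real_sqrt_mult)

lemma nrm_minus_commute: "nrm I (\<lambda>i. u i - w i) = nrm I (\<lambda>i. w i - u i)"
  unfolding nrm_def nn_def by (simp add: norm_minus_commute)

lemma nrm_rev: "\<bar>nrm I u - nrm I w\<bar> \<le> nrm I (\<lambda>i. u i - w i)"
proof -
  have 1: "nrm I u \<le> nrm I w + nrm I (\<lambda>i. u i - w i)"
    using nrm_triangle[of I w "\<lambda>i. u i - w i"] by simp
  have 2: "nrm I w \<le> nrm I u + nrm I (\<lambda>i. u i - w i)"
    using nrm_triangle[of I u "\<lambda>i. w i - u i"] nrm_minus_commute[of I u w] by simp
  show ?thesis using 1 2 by linarith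
qed

lemma sq_sum_le: "((a::real) + b)^2 \<le> 2 * (a^2 + b^2)"
  using sum_squares_ge_zero[of "a - b" 0] by (simp add: power2_eq_square algebra_simps)

lemma double_sum_aux: "(\<Sum>i\<in>I. \<Sum>j\<in>I. 2 * ((a::'i\<Rightarrow>real) i * b j + c i * d j)) = 2 * ((sum a I)*(sum b I) + (sum c I)*(sum d I))"
proof -
  have p: "(\<Sum>i\<in>I. \<Sum>j\<in>I. f i * g j) = sum f I * sum g I" for f g :: "'i \<Rightarrow> real"
    by (simp add: sum_product)
  have "(\<Sum>i\<in>I. \<Sum>j\<in>I. 2 * (a i * b j + c i * d j)) = 2 * ((\<Sum>i\<in>I. \<Sum>j\<in>I. a i * b j) + (\<Sum>i\<in>I. \<Sum>j\<in>I. c i * d j))"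
    by (simp add: sum.distrib sum_distrib_left distrib_left)
  then show ?thesis by (simp only: p)
qed

lemma Dv_unit:
  assumes f: "finite I" and x: "nn I x = 1" and y: "nn I y = 1"
  shows "Dv I x y \<le> 2 * sqrt (nn I (\<lambda>i. x i - y i))"
proof -
  have pex: "proj_entry I x i j = x i * cnj (x j)" for i j using x unfolding proj_entry_def nsq_nn by simp
  have pey: "proj_entry I y i j = y i * cnj (y j)" for i j using y unfolding proj_entry_def nsq_nn by simp
  have t: "(cmod (proj_entry I x i j - proj_entry I y i j))^2 \<le>
      2 * ((cmod (x i - y i))^2 * (cmod (x j))^2 + (cmod (y i))^2 * (cmod (x j - y j))^2)" for i j
  proof -
    have "x i * cnj (x j) - y i * cnj (y j) = (x i - y i) * cnj (x j) + y i * cnj (x j - y j)"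
      by (simp add: algebra_simps)
    then have "cmod (x i * cnj (x j) - y i * cnj (y j)) \<le> cmod (x i - y i) * cmod (x j) + cmod (y i) * cmod (x j - y j)"
      by (metis complex_mod_cnj norm_mult norm_triangle_ineq)
    then have "(cmod (x i * cnj (x j) - y i * cnj (y j)))^2 \<le> (cmod (x i - y i) * cmod (x j) + cmod (y i) * cmod (x j - y j))^2"
      by (rule power_mono) simp
    also have "\<dots> \<le> 2 * ((cmod (x i - y i) * cmod (x j))^2 + (cmod (y i) * cmod (x j - y j))^2)"
      by (rule sq_sum_le)
    finally show ?thesis unfolding pex pey by (simp add: power_mult_distrib)
  qed
  have "(\<Sum>i\<in>I. \<Sum>j\<in>I. (cmod (proj_entry I x i j - proj_entry I y i j))^2) \<le>
     (\<Sum>i\<in>I. \<Sum>j\<in>I. 2 * ((cmod (x i - y i))^2 * (cmod (x j))^2 + (cmod (y i))^2 * (cmod (x j - y j))^2))"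
    by (intro sum_mono t)
  also have "\<dots> = 2 * (nn I (\<lambda>i. x i - y i) * nn I x + nn I y * nn I (\<lambda>i. x i - y i))"
    unfolding nn_def by (rule double_sum_aux)
  also have "\<dots> = 4 * nn I (\<lambda>i. x i - y i)" using x y by simp
  finally have "Dv I x y \<le> sqrt (4 * nn I (\<lambda>i. x i - y i))" unfolding Dv_def by simp
  then show ?thesis by (simp add: real_sqrt_mult)
qed

lemma Dv_bound:
  assumes f: "finite I" and u: "nn I u > 0" and w: "nn I w > 0"
  shows "Dv I u w \<le> 4 * nrm I (\<lambda>i. u i - w i) / nrm I u"
proof -
  define A where "A = nrm I u"
  define B where "B = nrm I w"
  have A: "A > 0" using u unfolding A_def nrm_def by simp
  have B: "B > 0" using w unfolding B_def nrm_def by simp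
  define x where "x = (\<lambda>i. complex_of_real (1/A) * u i)"
  define y where "y = (\<lambda>i. complex_of_real (1/B) * w i)"
  have nx: "nn I x = 1" unfolding x_def nn_scale using A u unfolding A_def nrm_def
    by (simp add: power_divide norm_divide nn_nonneg)
  have ny: "nn I y = 1" unfolding y_def nn_scale using B w unfolding B_def nrm_def
    by (simp add: power_divide norm_divide nn_nonneg)
  have "Dv I u w = Dv I x y" unfolding x_def y_def
    using Dv_scale[of "complex_of_real (1/A)" "complex_of_real (1/B)" I u w] A B by simp
  also have "\<dots> \<le> 2 * nrm I (\<lambda>i. x i - y i)" using Dv_unit[OF f nx ny] unfolding nrm_def .
  also have "nrm I (\<lambda>i. x i - y i) \<le> 2 * nrm I (\<lambda>i. u i - w i) / A"
  proof -
    have eq: "(\<lambda>i. x i - y i) = (\<lambda>i. complex_of_real (1/A) * (u i - w i) + complex_of_real (1/A - 1/B) * w i)"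
      unfolding x_def y_def by (auto simp: algebra_simps)
    have tri: "nrm I (\<lambda>i. complex_of_real (1/A) * (u i - w i) + complex_of_real (1/A - 1/B) * w i)
        \<le> \<bar>1/A\<bar> * nrm I (\<lambda>i. u i - w i) + \<bar>1/A - 1/B\<bar> * nrm I w"
      using nrm_triangle[of I "\<lambda>i. complex_of_real (1/A) * (u i - w i)" "\<lambda>i. complex_of_real (1/A - 1/B) * w i"]
      unfolding nrm_scale norm_of_real .
    have "nrm I (\<lambda>i. x i - y i) \<le> (1/A) * nrm I (\<lambda>i. u i - w i) + \<bar>1/A - 1/B\<bar> * B"
      unfolding eq using tri A unfolding B_def by simp
    also have "\<bar>1/A - 1/B\<bar> * B = \<bar>B - A\<bar> / A" using A B by (simp add: field_simps abs_div abs_mult)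
    also have "\<bar>B - A\<bar> \<le> nrm I (\<lambda>i. u i - w i)" unfolding A_def B_def using nrm_rev[of I u w] by simp
    finally show ?thesis using A by (simp add: divide_right_mono add_divide_distrib)
  qed
  finally show ?thesis unfolding A_def by simp
qed

definition T :: "nat \<Rightarrow> int \<Rightarrow> (nat \<Rightarrow> complex) \<Rightarrow> (nat \<Rightarrow> complex)" where
  "T n k v = (\<lambda>i. if i \<in> {1..n+1} then (\<Sum>r\<le>n. (of_int k gchoose r) * v (i + r)) else 0)"

lemma T_cvecs: "T n k v \<in> cvecs {1..n+1}"
  unfolding T_def cvecs_def by auto

lemma cvecs_out: "v \<in> cvecs I \<Longrightarrow> i \<notin> I \<Longrightarrow> v i = 0"
  unfolding cvecs_def by auto

lemma sum_ext:
  fixes n M i :: nat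
  assumes v: "v \<in> cvecs {1..n+1}" and i: "i \<ge> 1" and M: "n \<le> M"
  shows "(\<Sum>r\<le>M. g r * v (i + r)) = (\<Sum>r\<le>n. g r * v (i + r))"
proof (rule sum.mono_neutral_right)
  show "\<forall>r\<in>{..M} - {..n}. g r * v (i + r) = 0"
  proof
    fix r assume "r \<in> {..M} - {..n}"
    then have "\<not> r \<le> n" by auto
    then have "\<not> (i + r \<le> n + 1)" using i by arith
    then have "i + r \<notin> {1..n+1}" by simp
    then show "g r * v (i + r) = 0" using cvecs_out[OF v] by simp
  qed
qed (use M in auto)

lemma mulv_J:
  assumes v: "v \<in> cvecs {1..n+1}"
  shows "mulv {1..n+1} (jordan1 n) v = (\<lambda>i. if i \<in> {1..n+1} then v i + v (Suc i) else 0)"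
proof
  fix i
  show "mulv {1..n+1} (jordan1 n) v i = (if i \<in> {1..n+1} then v i + v (Suc i) else 0)"
  proof (cases "i \<in> {1..n+1}")
    case True
    have "(\<Sum>j\<in>{1..n+1}. jordan1 n i j * v j) = (\<Sum>j\<in>{1..n+1}. if j \<in> {i, Suc i} then v j else 0)"
      using True by (intro sum.cong) (auto simp: jordan1_def)
    also have "\<dots> = (\<Sum>j\<in>{1..n+1} \<inter> {i, Suc i}. v j)"
      by (simp add: sum.inter_restrict)
    also have "\<dots> = v i + v (Suc i)"
    proof (cases "Suc i \<in> {1..n+1}")
      case True2: True
      then have "{1..n+1} \<inter> {i, Suc i} = {i, Suc i}" using True by auto
      then show ?thesis by simp
    next
      case False
      then have "{1..n+1} \<inter> {i, Suc i} = {i}" using True by auto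
      then show ?thesis using cvecs_out[OF v False] by simp
    qed
    finally show ?thesis using True unfolding mulv_def by simp
  next
    case False
    then show ?thesis unfolding mulv_def by (simp only: if_not_P[OF False] if_False)
  qed
qed

lemma T_zero: "v \<in> cvecs {1..n+1} \<Longrightarrow> T n 0 v = v"
  unfolding T_def by (rule ext) (auto simp: gbinomial_0_left sum.atMost_Suc_shift cvecs_out
      intro: sum.neutral split: if_splits, subst sum.atMost_shift, simp)

lemma T_step:
  assumes v: "v \<in> cvecs {1..n+1}"
  shows "mulv {1..n+1} (jordan1 n) (T n k v) = T n (k+1) v"
proof
  fix i
  define g where "g r = (of_int k gchoose r :: complex)" for r
  show "mulv {1..n+1} (jordan1 n) (T n k v) i = T n (k+1) v i"
  proof (cases "i \<in> {1..n+1}")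
    case False
    then show ?thesis unfolding mulv_def T_def by (simp only: if_not_P[OF False] if_False)
  next
    case True
    then have i1: "i \<ge> 1" by simp
    have A: "T n k v i = (\<Sum>r\<le>n. g r * v (i+r))" using True unfolding T_def g_def by simp
    have B: "T n k v (Suc i) = (\<Sum>r\<le>n. g r * v (i + Suc r))"
    proof (cases "Suc i \<in> {1..n+1}")
      case True
      then show ?thesis unfolding T_def g_def by simp
    next
      case False
      then have "v (i + Suc r) = 0" for r using cvecs_out[OF v] by simp
      then show ?thesis using False unfolding T_def by simp
    qed
    have A2: "(\<Sum>r\<le>n. g r * v (i+r)) = v i + (\<Sum>r\<le>n. g (Suc r) * v (i + Suc r))"
    proof -
      have "(\<Sum>r\<le>n. g r * v (i+r)) = (\<Sum>r\<le>Suc n. g r * v (i+r))"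
        using sum_ext[OF v i1, of "Suc n" g] by simp
      also have "\<dots> = v i + (\<Sum>r\<le>n. g (Suc r) * v (i + Suc r))"
        by (subst sum.atMost_Suc_shift) (simp add: g_def)
      finally show ?thesis .
    qed
    have "T n (k+1) v i = (\<Sum>r\<le>n. (of_int k + 1 gchoose r) * v (i+r))" using True unfolding T_def by simp
    also have "\<dots> = (\<Sum>r\<le>Suc n. (of_int k + 1 gchoose r) * v (i+r))"
      using sum_ext[OF v i1, of "Suc n" "\<lambda>r. (of_int k + 1 gchoose r)"] by simp
    also have "\<dots> = v i + (\<Sum>r\<le>n. (of_int k + 1 gchoose Suc r) * v (i + Suc r))"
      by (subst sum.atMost_Suc_shift) simp
    also have "\<dots> = v i + (\<Sum>r\<le>n. g r * v (i + Suc r)) + (\<Sum>r\<le>n. g (Suc r) * v (i + Suc r))"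
      unfolding gbinomial_Suc_Suc g_def by (simp add: distrib_right sum.distrib)
    also have "\<dots> = T n k v i + T n k v (Suc i)" unfolding A B A2 by simp
    finally show ?thesis unfolding mulv_J[OF T_cvecs] using True by simp
  qed
qed

lemma J_inj:
  assumes x: "x \<in> cvecs {1..n+1}" and y: "y \<in> cvecs {1..n+1}"
    and eq: "mulv {1..n+1} (jordan1 n) x = mulv {1..n+1} (jordan1 n) y"
  shows "x = y"
proof -
  have step: "x i + x (Suc i) = y i + y (Suc i)" if "i \<in> {1..n+1}" for i
    using fun_cong[OF eq, of i] that unfolding mulv_J[OF x] mulv_J[OF y] by simp
  have main: "\<forall>i. n + 1 - i = m \<longrightarrow> i \<in> {1..n+1} \<longrightarrow> x i = y i" for m
  proof (induction m)
    case 0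
    show ?case
    proof (intro allI impI)
      fix i assume "n + 1 - i = 0" "i \<in> {1..n+1}"
      then have "i = n+1" by simp
      moreover have "x (Suc (n+1)) = 0" "y (Suc (n+1)) = 0" using cvecs_out[OF x] cvecs_out[OF y] by auto
      ultimately show "x i = y i" using step[of i] by simp
    qed
  next
    case (Suc m)
    show ?case
    proof (intro allI impI)
      fix i assume a: "n + 1 - i = Suc m" "i \<in> {1..n+1}"
      then have "n + 1 - Suc i = m" "Suc i \<in> {1..n+1}" by auto
      then have "x (Suc i) = y (Suc i)" using Suc by blast
      then show "x i = y i" using step[OF a(2)] by simp
    qed
  qed
  show ?thesis
  proof
    fix i show "x i = y i"
      using main[of "n+1-i"] cvecs_out[OF x, of i] cvecs_out[OF y, of i] by (cases "i \<in> {1..n+1}") auto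
  qed
qed

lemma T_group:
  assumes v: "v \<in> cvecs {1..n+1}"
  shows "T n j (T n k v) = T n (j + k) v"
proof (induction j rule: int_induct[where k=0])
  case base
  then show ?case using T_zero[OF T_cvecs] by simp
next
  case (step1 i)
  have "T n (i+1) (T n k v) = mulv {1..n+1} (jordan1 n) (T n i (T n k v))"
    using T_step[OF T_cvecs] by simp
  also have "\<dots> = T n (i + k + 1) v" using step1(2) T_step[OF v] by simp
  finally show ?case by (simp add: algebra_simps)
next
  case (step2 i)
  have "mulv {1..n+1} (jordan1 n) (T n (i-1) (T n k v)) = T n i (T n k v)"
    using T_step[OF T_cvecs, of n "i-1"] by simp
  also have "\<dots> = T n (i+k) v" by (rule step2(2))
  also have "\<dots> = mulv {1..n+1} (jordan1 n) (T n (i - 1 + k) v)"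
    using T_step[OF v, of "i-1+k"] by (simp add: algebra_simps)
  finally show ?case using J_inj[OF T_cvecs T_cvecs] by blast
qed

lemma T_scale: "T n k (\<lambda>i. c * v i) = (\<lambda>i. c * T n k v i)"
  unfolding T_def by (auto simp: sum_distrib_left algebra_simps)

lemma T_add: "T n k (\<lambda>i. u i + w i) = (\<lambda>i. T n k u i + T n k w i)"
  unfolding T_def by (auto simp: sum.distrib algebra_simps)

lemma T_0vec: "T n k (\<lambda>i. 0) = (\<lambda>i. 0)"
  unfolding T_def by auto

lemma T_inv: "v \<in> cvecs {1..n+1} \<Longrightarrow> T n (-k) (T n k v) = v"
  using T_group[of v n "-k" k] T_zero[of v n] by simp

lemma T_nonzero: "v \<in> cvecs {1..n+1} \<Longrightarrow> v \<noteq> (\<lambda>i. 0) \<Longrightarrow> T n k v \<noteq> (\<lambda>i. 0)"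
  using T_inv[of v n k] T_0vec[of n "-k"] by auto

lemma mulv_scale: "mulv I A (\<lambda>i. c * v i) = (\<lambda>i. c * mulv I A v i)"
  unfolding mulv_def by (auto simp: sum_distrib_left algebra_simps)

lemma mulv_J_T1: "v \<in> cvecs {1..n+1} \<Longrightarrow> mulv {1..n+1} (jordan1 n) v = T n 1 v"
  using T_step[of v n 0] T_zero[of v n] by simp

lemma F_pt: "v \<in> cvecs {1..n+1} \<Longrightarrow> pmap {1..n+1} (jordan1 n) (pt v) = pt (T n 1 v)"
proof -
  assume v: "v \<in> cvecs {1..n+1}"
  obtain c where c: "c \<noteq> 0" "(SOME x. x \<in> pt v) = (\<lambda>i. c * v i)" using some_pt by blast
  show ?thesis unfolding pmap_def c(2) mulv_scale mulv_J_T1[OF v] pt_scale[OF c(1)] ..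
qed

lemma PS_iff: "p \<in> PS I \<longleftrightarrow> (\<exists>v. v \<in> cvecs I \<and> v \<noteq> (\<lambda>i. 0) \<and> p = pt v)"
  unfolding PS_def by auto

lemma Fpow_pt: "v \<in> cvecs {1..n+1} \<Longrightarrow> (pmap {1..n+1} (jordan1 n) ^^ m) (pt v) = pt (T n (int m) v)"
proof (induction m)
  case 0
  then show ?case using T_zero[of v n] by simp
next
  case (Suc m)
  have "(pmap {1..n+1} (jordan1 n) ^^ Suc m) (pt v) = pmap {1..n+1} (jordan1 n) (pt (T n (int m) v))"
    using Suc by simp
  also have "\<dots> = pt (T n 1 (T n (int m) v))" by (rule F_pt[OF T_cvecs])
  also have "\<dots> = pt (T n (int (Suc m)) v)" using T_group[OF Suc.prems, of 1 "int m"] by (simp add: add.commute)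
  finally show ?case .
qed

lemma F_into: "p \<in> PS {1..n+1} \<Longrightarrow> pmap {1..n+1} (jordan1 n) p \<in> PS {1..n+1}"
  unfolding PS_iff using F_pt T_cvecs T_nonzero by metis

lemma F_inj: "inj_on (pmap {1..n+1} (jordan1 n)) (PS {1..n+1})"
proof
  fix p q assume p: "p \<in> PS {1..n+1}" and q: "q \<in> PS {1..n+1}"
    and eq: "pmap {1..n+1} (jordan1 n) p = pmap {1..n+1} (jordan1 n) q"
  obtain u where u: "u \<in> cvecs {1..n+1}" "p = pt u" using p unfolding PS_iff by auto
  obtain w where w: "w \<in> cvecs {1..n+1}" "q = pt w" using q unfolding PS_iff by auto
  have "pt (T n 1 u) = pt (T n 1 w)" using eq unfolding u(2) w(2) F_pt[OF u(1)] F_pt[OF w(1)] .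
  then obtain c where c: "c \<noteq> 0" "T n 1 u = (\<lambda>i. c * T n 1 w i)" using pt_eqD by blast
  then have "T n (-1) (T n 1 u) = T n (-1) (T n 1 (\<lambda>i. c * w i))" by (simp add: T_scale)
  then have "u = (\<lambda>i. c * w i)" using T_inv[OF u(1), of 1] T_inv[of "\<lambda>i. c * w i" n 1] w(1)
    by (simp add: cvecs_def)
  then show "p = q" unfolding u(2) w(2) using pt_scale[OF c(1)] by simp
qed

lemma invF_pt:
  assumes v: "v \<in> cvecs {1..n+1}" "v \<noteq> (\<lambda>i. 0)"
  shows "inv_into (PS {1..n+1}) (pmap {1..n+1} (jordan1 n)) (pt v) = pt (T n (-1) v)"
proof -
  have mem: "pt (T n (-1) v) \<in> PS {1..n+1}" unfolding PS_iff using T_cvecs T_nonzero[OF v] by blast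
  have "pmap {1..n+1} (jordan1 n) (pt (T n (-1) v)) = pt v"
    using F_pt[OF T_cvecs, of n "-1" v] T_group[OF v(1), of 1 "-1"] T_zero[OF v(1)] by simp
  then show ?thesis using inv_into_f_f[OF F_inj mem] by simp
qed

lemma invpow_pt:
  assumes v: "v \<in> cvecs {1..n+1}" "v \<noteq> (\<lambda>i. 0)"
  shows "(inv_into (PS {1..n+1}) (pmap {1..n+1} (jordan1 n)) ^^ m) (pt v) = pt (T n (- int m) v)"
proof (induction m)
  case 0
  then show ?case using T_zero[OF v(1)] by simp
next
  case (Suc m)
  have "(inv_into (PS {1..n+1}) (pmap {1..n+1} (jordan1 n)) ^^ Suc m) (pt v)
     = inv_into (PS {1..n+1}) (pmap {1..n+1} (jordan1 n)) (pt (T n (- int m) v))" using Suc by simp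
  also have "\<dots> = pt (T n (-1) (T n (- int m) v))" by (rule invF_pt[OF T_cvecs T_nonzero[OF v]])
  also have "\<dots> = pt (T n (- int (Suc m)) v)" using T_group[OF v(1), of "-1" "- int m"] by simp
  finally show ?case .
qed

lemma zpow_pt:
  assumes v: "v \<in> cvecs {1..n+1}" "v \<noteq> (\<lambda>i. 0)"
  shows "zpow (PS {1..n+1}) (pmap {1..n+1} (jordan1 n)) k (pt v) = pt (T n k v)"
  unfolding zpow_def using Fpow_pt[OF v(1)] invpow_pt[OF v] by auto

definition G :: "nat \<Rightarrow> int \<Rightarrow> (nat \<Rightarrow> complex) set \<Rightarrow> (nat \<Rightarrow> complex) set" where
  "G n k = restrict (zpow (PS {1..n+1}) (pmap {1..n+1} (jordan1 n)) k) (PS {1..n+1})"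

lemma cyclic_G: "cyclic (PS {1..n+1}) (pmap {1..n+1} (jordan1 n)) = range (G n)"
  unfolding cyclic_def G_def by auto

lemma G_pt: "v \<in> cvecs {1..n+1} \<Longrightarrow> v \<noteq> (\<lambda>i. 0) \<Longrightarrow> G n k (pt v) = pt (T n k v)"
  unfolding G_def using zpow_pt[of v n k] by (auto simp: PS_iff)

lemma e_cvecs: "k \<in> I \<Longrightarrow> e k \<in> cvecs I" unfolding e_def cvecs_def by auto

lemma e_nonzero: "e k \<noteq> (\<lambda>i. 0)" unfolding e_def by (auto dest: fun_cong[of _ _ k])

lemma T_e2:
  assumes n: "n \<ge> 1"
  shows "T n k (e 2) 1 = of_int k" "T n k (e 2) 2 = 1"
proof -
  have "T n k (e 2) 1 = (\<Sum>r\<le>n. (of_int k gchoose r) * e 2 (1 + r))" unfolding T_def by simp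
  also have "\<dots> = (\<Sum>r\<le>n. if r = 1 then (of_int k gchoose r) else 0)"
    by (rule sum.cong) (auto simp: e_def)
  also have "\<dots> = of_int k" using n by (simp add: sum.delta)
  finally show "T n k (e 2) 1 = of_int k" .
  have "T n k (e 2) 2 = (\<Sum>r\<le>n. (of_int k gchoose r) * e 2 (2 + r))" using n unfolding T_def by simp
  also have "\<dots> = (\<Sum>r\<le>n. if r = 0 then (of_int k gchoose r) else 0)"
    by (rule sum.cong) (auto simp: e_def)
  also have "\<dots> = 1" by (simp add: sum.delta)
  finally show "T n k (e 2) 2 = 1" .
qed

lemma G_inj: "n \<ge> 1 \<Longrightarrow> inj (G n)"
proof
  fix j k assume n: "n \<ge> 1" and eq: "G n j = G n k"
  have e2: "e 2 \<in> cvecs {1..n+1}" using n by (intro e_cvecs) auto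
  have "pt (T n j (e 2)) = pt (T n k (e 2))" using fun_cong[OF eq, of "pt (e 2)"]
    unfolding G_pt[OF e2 e_nonzero] .
  then obtain c where c: "T n j (e 2) = (\<lambda>i. c * T n k (e 2) i)" using pt_eqD by blast
  have "c = 1" using fun_cong[OF c, of 2] T_e2[OF n] by simp
  then have "(of_int j :: complex) = of_int k" using fun_cong[OF c, of 1] T_e2[OF n] by simp
  then show "j = k" by simp
qed

lemma inj_int_eventually:
  assumes "inj (\<kappa>::nat\<Rightarrow>int)"
  shows "eventually (\<lambda>m. N \<le> \<bar>\<kappa> m\<bar>) sequentially"
proof -
  have "finite (\<kappa> -` {-N<..<N})" by (rule finite_vimageI) (use assms in auto)
  moreover have "{m. \<not> N \<le> \<bar>\<kappa> m\<bar>} \<subseteq> \<kappa> -` {-N<..<N}" by auto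
  ultimately have "finite {m. \<not> N \<le> \<bar>\<kappa> m\<bar>}" by (rule finite_subset[rotated])
  then show ?thesis unfolding cofinite_eq_sequentially[symmetric] eventually_cofinite .
qed

lemma cyclic_seq:
  assumes n: "n \<ge> 1" and g: "inj g" "\<forall>m. g m \<in> cyclic (PS {1..n+1}) (pmap {1..n+1} (jordan1 n))"
  shows "\<exists>\<kappa>. inj \<kappa> \<and> (\<forall>m. g m = G n (\<kappa> m))"
proof -
  have "\<forall>m. \<exists>k. g m = G n k" using g(2) unfolding cyclic_G by auto
  then obtain \<kappa> where k: "\<forall>m. g m = G n (\<kappa> m)" by metis
  have "inj \<kappa>" using g(1) k unfolding inj_def by metis
  then show ?thesis using k by blast
qed

lemma div_fact_le: "0 \<le> (a::real) \<Longrightarrow> a / fact r \<le> a"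
  using divide_left_mono[of 1 "fact r" a] by simp

lemma gb_upper: "cmod (of_int k gchoose r :: complex) \<le> (real_of_int \<bar>k\<bar> + r)^r"
proof -
  have "cmod (of_int k gchoose r :: complex) = (\<Prod>i=0..<r. cmod (of_int k - of_nat i)) / fact r"
    unfolding gbinomial_prod_rev by (simp add: norm_divide prod_norm[symmetric])
  also have "\<dots> \<le> (\<Prod>i=0..<r. cmod (of_int k - of_nat i))"
    by (rule div_fact_le) (auto intro: prod_nonneg)
  also have "\<dots> \<le> (\<Prod>i=0..<r. real_of_int \<bar>k\<bar> + r)"
  proof (rule prod_mono)
    fix i assume i: "i \<in> {0..<r}"
    have "cmod (of_int k - of_nat i :: complex) \<le> cmod (of_int k :: complex) + cmod (of_nat i :: complex)"
      by (rule norm_triangle_ineq4)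
    also have "\<dots> = real_of_int \<bar>k\<bar> + i" by (simp del: of_int_abs add: norm_of_int)
    also have "\<dots> \<le> real_of_int \<bar>k\<bar> + r" using i by simp
    finally show "0 \<le> cmod (of_int k - of_nat i :: complex) \<and> cmod (of_int k - of_nat i :: complex) \<le> real_of_int \<bar>k\<bar> + r" by simp
  qed
  also have "\<dots> = (real_of_int \<bar>k\<bar> + r)^r" by simp
  finally show ?thesis .
qed

lemma gb_lower:
  assumes "real d \<le> real_of_int \<bar>k\<bar>"
  shows "(real_of_int \<bar>k\<bar> - d)^d / fact d \<le> cmod (of_int k gchoose d :: complex)"
proof -
  have "(\<Prod>i=0..<d. real_of_int \<bar>k\<bar> - d) \<le> (\<Prod>i=0..<d. cmod (of_int k - of_nat i :: complex))"
  proof (rule prod_mono)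
    fix i assume i: "i \<in> {0..<d}"
    have "real_of_int \<bar>k\<bar> - d \<le> cmod (of_int k :: complex) - cmod (of_nat i :: complex)"
      using i by (simp del: of_int_abs add: norm_of_int)
    also have "\<dots> \<le> cmod (of_int k - of_nat i :: complex)" by (rule norm_triangle_ineq2)
    finally show "0 \<le> real_of_int \<bar>k\<bar> - d \<and> real_of_int \<bar>k\<bar> - d \<le> cmod (of_int k - of_nat i :: complex)"
      using assms by simp
  qed
  then have "(real_of_int \<bar>k\<bar> - d)^d \<le> (\<Prod>i=0..<d. cmod (of_int k - of_nat i :: complex))" by simp
  then have "(real_of_int \<bar>k\<bar> - d)^d / fact d \<le> (\<Prod>i=0..<d. cmod (of_int k - of_nat i :: complex)) / fact d"
    by (rule divide_right_mono) simp
  also have "\<dots> = cmod (of_int k gchoose d :: complex)"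
    unfolding gbinomial_prod_rev by (simp add: norm_divide prod_norm[symmetric])
  finally show ?thesis .
qed

lemma growth:
  fixes d n :: nat and c K :: real
  assumes d1: "1 \<le> d" and dn: "d \<le> n" and c: "c > 0"
  shows "\<exists>N::real. \<forall>k::int. N \<le> \<bar>k\<bar> \<longrightarrow>
            K * (\<Sum>r<d. cmod (of_int k gchoose r :: complex)) \<le> c * cmod (of_int k gchoose d :: complex)"
proof -
  define N where "N = max (2 * real n + 1) (2 * \<bar>K\<bar> * d * 4^(d-1) * fact d / c)"
  show ?thesis
  proof (intro exI allI impI)
    fix k :: int assume kN: "N \<le> \<bar>k\<bar>"
    define x where "x = real_of_int \<bar>k\<bar>"
    define y where "y = x / 2"
    have x1: "2 * real n + 1 \<le> x" using kN unfolding N_def x_def by simp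
    have xK: "2 * \<bar>K\<bar> * d * 4^(d-1) * fact d / c \<le> x" using kN unfolding N_def x_def by simp
    have y0: "y \<ge> 0" using x1 unfolding y_def by simp
    have B: "(\<Sum>r<d. cmod (of_int k gchoose r :: complex)) \<le> d * (4 * y)^(d-1)"
    proof -
      have "(\<Sum>r<d. cmod (of_int k gchoose r :: complex)) \<le> (\<Sum>r<d. (4 * y)^(d-1))"
      proof (rule sum_mono)
        fix r assume r: "r \<in> {..<d}"
        have "cmod (of_int k gchoose r :: complex) \<le> (x + r)^r" unfolding x_def by (rule gb_upper)
        also have "\<dots> \<le> (4*y)^r" by (rule power_mono) (use x1 r dn in \<open>auto simp: y_def\<close>)
        also have "\<dots> \<le> (4*y)^(d-1)" by (rule power_increasing) (use x1 r in \<open>auto simp: y_def\<close>)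
        finally show "cmod (of_int k gchoose r :: complex) \<le> (4 * y)^(d-1)" .
      qed
      then show ?thesis by simp
    qed
    have L: "y^d / fact d \<le> cmod (of_int k gchoose d :: complex)"
    proof -
      have "y^d / fact d \<le> (x - d)^d / fact d"
        by (intro divide_right_mono power_mono) (use x1 dn in \<open>auto simp: y_def\<close>)
      also have "\<dots> \<le> cmod (of_int k gchoose d :: complex)" unfolding x_def
        by (rule gb_lower) (use x1 dn in \<open>auto simp: x_def\<close>)
      finally show ?thesis .
    qed
    have key: "\<bar>K\<bar> * d * 4^(d-1) * fact d \<le> c * y" using xK c unfolding y_def
      by (simp add: field_simps)
    have "K * (\<Sum>r<d. cmod (of_int k gchoose r :: complex)) \<le> \<bar>K\<bar> * (d * (4 * y)^(d-1))"
      by (rule order_trans[OF abs_ge_self[THEN mult_right_mono] mult_left_mono[OF B]]) (auto intro: sum_nonneg)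
    also have "\<dots> = (\<bar>K\<bar> * d * 4^(d-1) * fact d) * y^(d-1) / fact d" by (simp add: power_mult_distrib)
    also have "\<dots> \<le> (c * y) * y^(d-1) / fact d"
      by (intro divide_right_mono mult_right_mono key) (use y0 in auto)
    also have "\<dots> = c * (y^d / fact d)" using d1 by (cases d) auto
    also have "\<dots> \<le> c * cmod (of_int k gchoose d :: complex)" using L c by (intro mult_left_mono) auto
    finally show "K * (\<Sum>r<d. cmod (of_int k gchoose r :: complex)) \<le> c * cmod (of_int k gchoose d :: complex)" .
  qed
qed

lemma coord_le_nrm:
  fixes n :: nat
  assumes w: "w \<in> cvecs {1..n+1}"
  shows "cmod (w j) \<le> sqrt (nn {1..n+1} w)"
proof (cases "j \<in> {1..n+1}")
  case True
  have "(cmod (w j))^2 \<le> nn {1..n+1} w" unfolding nn_def by (rule member_le_sum[OF True]) auto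
  then show ?thesis using real_le_rsqrt by simp
next
  case False
  then show ?thesis using cvecs_out[OF w False] by (simp add: nn_nonneg)
qed

lemma lemU:
  fixes n d :: nat
  assumes dn: "d \<le> n" and rho: "\<rho> > 0" and eps: "\<epsilon> > 0"
  shows "\<exists>N::real. \<forall>k::int. N \<le> real_of_int \<bar>k\<bar> \<longrightarrow> (\<forall>w. w \<in> cvecs {1..n+1} \<longrightarrow> (\<forall>i. d+1 < i \<longrightarrow> w i = 0) \<longrightarrow>
     \<rho>^2 * nn {1..n+1} w \<le> (cmod (w (d+1)))^2 \<longrightarrow>
     (\<Sum>i\<in>{2..n+1}. (cmod (T n k w i))^2) \<le> \<epsilon> * (cmod (T n k w 1))^2)"
proof (cases "d = 0")
  case True
  show ?thesis
  proof (intro exI[of _ 0] allI impI)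
    fix k :: int and w assume w: "w \<in> cvecs {1..n+1}" "\<forall>i. d+1 < i \<longrightarrow> w i = 0"
    have "T n k w i = 0" if "i \<in> {2..n+1}" for i
      using that w(2) True unfolding T_def by (auto intro!: sum.neutral)
    then show "(\<Sum>i\<in>{2..n+1}. (cmod (T n k w i))^2) \<le> \<epsilon> * (cmod (T n k w 1))^2"
      using eps by simp
  qed
next
  case False
  then have d1: "1 \<le> d" by simp
  define K where "K = 2 + real n / \<epsilon>"
  obtain N where N: "\<forall>k::int. N \<le> real_of_int \<bar>k\<bar> \<longrightarrow>
            K * (\<Sum>r<d. cmod (of_int k gchoose r :: complex)) \<le> \<rho> * cmod (of_int k gchoose d :: complex)"
    using growth[OF d1 dn rho, of K] by blast
  show ?thesis
  proof (intro exI[of _ N] allI impI)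
    fix k :: int and w assume kN: "N \<le> real_of_int \<bar>k\<bar>" and w: "w \<in> cvecs {1..n+1}" "\<forall>i. d+1 < i \<longrightarrow> w i = 0"
      and wd: "\<rho>^2 * nn {1..n+1} w \<le> (cmod (w (d+1)))^2"
    define s where "s = sqrt (nn {1..n+1} w)"
    define B where "B = (\<Sum>r<d. cmod (of_int k gchoose r :: complex))"
    define g where "g r = (of_int k gchoose r :: complex)" for r
    have s0: "s \<ge> 0" unfolding s_def by (simp add: nn_nonneg)
    have B0: "B \<ge> 0" unfolding B_def by (simp add: sum_nonneg)
    have wj: "cmod (w j) \<le> s" for j unfolding s_def by (rule coord_le_nrm[OF w(1)])
    have wd': "\<rho> * s \<le> cmod (w (d+1))"
    proof -
      have "sqrt (\<rho>^2 * nn {1..n+1} w) \<le> sqrt ((cmod (w (d+1)))^2)" using wd by (rule real_sqrt_le_mono)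
      then show ?thesis unfolding s_def using rho by (simp add: real_sqrt_mult)
    qed
    have growthk: "K * B \<le> \<rho> * cmod (g d)" using N kN unfolding B_def g_def by blast
    have Ti: "cmod (T n k w i) \<le> B * s" if i: "i \<in> {2..n+1}" for i
    proof -
      have "T n k w i = (\<Sum>r\<le>n. g r * w (i + r))" using i unfolding T_def g_def by simp
      also have "\<dots> = (\<Sum>r<d. g r * w (i + r))"
      proof (rule sum.mono_neutral_right)
        show "\<forall>r\<in>{..n} - {..<d}. g r * w (i + r) = 0"
        proof
          fix r assume "r \<in> {..n} - {..<d}"
          then have "d + 1 < i + r" using i by auto
          then show "g r * w (i + r) = 0" using w(2) by simp
        qed
      qed (use dn in auto)
      finally have "cmod (T n k w i) \<le> (\<Sum>r<d. cmod (g r * w (i + r)))" by (simp add: norm_sum)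
      also have "\<dots> \<le> (\<Sum>r<d. cmod (g r) * s)"
        by (rule sum_mono) (simp add: norm_mult mult_left_mono wj)
      also have "\<dots> = B * s" unfolding B_def g_def by (simp add: sum_distrib_right)
      finally show ?thesis .
    qed
    have T1: "(K - 1) * B * s \<le> cmod (T n k w 1)"
    proof -
      have "T n k w 1 = (\<Sum>r\<le>n. g r * w (1 + r))" unfolding T_def g_def by simp
      also have "\<dots> = (\<Sum>r<Suc d. g r * w (1 + r))"
        by (rule sum.mono_neutral_right) (use dn w(2) in auto)
      also have "\<dots> = (\<Sum>r<d. g r * w (1 + r)) + g d * w (d+1)" by simp
      finally have eq: "T n k w 1 = (\<Sum>r<d. g r * w (1 + r)) + g d * w (d+1)" .
      have S: "cmod (\<Sum>r<d. g r * w (1 + r)) \<le> B * s"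
      proof -
        have "cmod (\<Sum>r<d. g r * w (1 + r)) \<le> (\<Sum>r<d. cmod (g r) * s)"
          by (rule order_trans[OF norm_sum sum_mono]) (simp add: norm_mult mult_left_mono wj)
        also have "\<dots> = B * s" unfolding B_def g_def by (simp add: sum_distrib_right)
        finally show ?thesis .
      qed
      have "cmod (g d) * (\<rho> * s) \<le> cmod (g d * w (d+1))"
        unfolding norm_mult by (rule mult_left_mono[OF wd']) simp
      moreover have "cmod (g d * w (d+1)) - cmod (\<Sum>r<d. g r * w (1 + r)) \<le> cmod (T n k w 1)"
        unfolding eq using norm_triangle_ineq2[of "g d * w (d+1)" "- (\<Sum>r<d. g r * w (1 + r))"]
        by (simp add: add.commute)
      moreover have "K * B * s \<le> \<rho> * cmod (g d) * s" using growthk s0 by (rule mult_right_mono)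
      ultimately show ?thesis using S by (simp add: algebra_simps)
    qed
    have K1: "K - 1 \<ge> 1" unfolding K_def using eps by simp
    have "(\<Sum>i\<in>{2..n+1}. (cmod (T n k w i))^2) \<le> (\<Sum>i\<in>{2..n+1}. (B * s)^2)"
      by (rule sum_mono, rule power_mono[OF Ti]) auto
    also have "\<dots> = real n * (B * s)^2" by simp
    also have "\<dots> \<le> \<epsilon> * ((K - 1) * (B * s)^2)"
    proof -
      have "real n = \<epsilon> * (K - 2)" unfolding K_def using eps by simp
      then have "real n * (B * s)^2 = \<epsilon> * ((K - 2) * (B * s)^2)" by simp
      also have "\<dots> \<le> \<epsilon> * ((K - 1) * (B * s)^2)" using eps by (intro mult_left_mono mult_right_mono) auto
      finally show ?thesis .
    qed
    also have "\<dots> \<le> \<epsilon> * ((K - 1)^2 * (B * s)^2)"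
      using K1 eps by (intro mult_left_mono mult_right_mono) (auto simp: power2_eq_square)
    also have "\<dots> \<le> \<epsilon> * (cmod (T n k w 1))^2"
    proof -
      have "((K - 1) * (B * s))^2 \<le> (cmod (T n k w 1))^2"
        by (rule power_mono) (use T1 K1 B0 s0 in \<open>auto simp: mult.assoc\<close>)
      then show ?thesis using eps by (simp add: power_mult_distrib)
    qed
    finally show "(\<Sum>i\<in>{2..n+1}. (cmod (T n k w i))^2) \<le> \<epsilon> * (cmod (T n k w 1))^2" .
  qed
qed

definition Q :: "'i set \<Rightarrow> 'i \<Rightarrow> ('i \<Rightarrow> complex) set \<Rightarrow> real" where
  "Q I i p = qq I i (SOME v. v \<in> p)"

lemma Q_pt: "Q I i (pt v) = qq I i v"
proof -
  obtain c where c: "c \<noteq> 0" "(SOME x. x \<in> pt v) = (\<lambda>i. c * v i)" using some_pt by blast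
  show ?thesis unfolding Q_def c(2) qq_scale[OF c(1)] ..
qed

lemma Q_lip:
  assumes f: "finite I" and i: "i \<in> I" and p: "p \<in> PS I" and q: "q \<in> PS I"
  shows "\<bar>Q I i p - Q I i q\<bar> \<le> pdist I p q"
proof -
  obtain u where u: "p = pt u" using p unfolding PS_iff by auto
  obtain w where w: "q = pt w" using q unfolding PS_iff by auto
  show ?thesis unfolding u w Q_pt pdist_pt by (rule qq_lip[OF f i])
qed

lemma pdist_self: "p \<in> PS I \<Longrightarrow> pdist I p p = 0"
  unfolding PS_iff using pdist_pt Dv_self by metis

lemma pdist_nonneg: "p \<in> PS I \<Longrightarrow> q \<in> PS I \<Longrightarrow> pdist I p q \<ge> 0"
  unfolding PS_iff using pdist_pt Dv_nonneg by metis

lemma pdist_sym: "p \<in> PS I \<Longrightarrow> q \<in> PS I \<Longrightarrow> pdist I p q = pdist I q p"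
  unfolding PS_iff using pdist_pt Dv_sym by metis

lemma mclos_sup: "S \<subseteq> PS I \<Longrightarrow> S \<subseteq> mclos (PS I) (pdist I) S"
  unfolding mclos_def mconv_def
proof (intro subsetI CollectI conjI)
  fix y assume "S \<subseteq> PS I" "y \<in> S"
  then show "y \<in> PS I" "\<exists>s. (\<forall>m. s m \<in> S) \<and> (\<lambda>m. pdist I (s m) y) \<longlonglongrightarrow> 0"
    by (auto intro!: exI[of _ "\<lambda>m. y"] simp: pdist_self)
qed

lemma mclos_level:
  assumes f: "finite I" and i: "i \<in> I" and S: "S \<subseteq> {p \<in> PS I. Q I i p = c}"
  shows "mclos (PS I) (pdist I) S \<subseteq> {p \<in> PS I. Q I i p = c}"
proof
  fix y assume "y \<in> mclos (PS I) (pdist I) S"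
  then obtain s where y: "y \<in> PS I" and s: "\<forall>m. s m \<in> S" and lim: "(\<lambda>m. pdist I (s m) y) \<longlonglongrightarrow> 0"
    unfolding mclos_def mconv_def by auto
  have "\<bar>c - Q I i y\<bar> \<le> pdist I (s m) y" for m
  proof -
    have sm: "s m \<in> PS I" "Q I i (s m) = c" using s S by auto
    show ?thesis using Q_lip[OF f i sm(1) y] sm(2) by simp
  qed
  then have "\<bar>c - Q I i y\<bar> \<le> 0" using lim by (intro LIMSEQ_le_const) auto
  then show "y \<in> {p \<in> PS I. Q I i p = c}" using y by simp
qed

lemma qq_one_imp:
  fixes n :: nat
  assumes v: "v \<in> cvecs {1..n+1}" "v \<noteq> (\<lambda>i. 0)" and q: "qq {1..n+1} 1 v = 1"
  shows "pt v = pt (e 1)"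
proof -
  have pos: "nn {1..n+1} v > 0" by (rule nn_pos[OF _ v]) simp
  have eq: "(cmod (v 1))^2 = nn {1..n+1} v" using q pos unfolding qq_def by simp
  have "nn {1..n+1} v = (cmod (v 1))^2 + (\<Sum>i\<in>{1..n+1} - {1}. (cmod (v i))^2)"
    unfolding nn_def by (subst sum.remove[of _ 1]) auto
  then have "(\<Sum>i\<in>{1..n+1} - {1}. (cmod (v i))^2) = 0" using eq by simp
  then have z: "\<forall>i\<in>{1..n+1} - {1}. (cmod (v i))^2 = 0" by (subst (asm) sum_nonneg_eq_0_iff) auto
  have vv: "v = (\<lambda>i. v 1 * e 1 i)"
  proof
    fix i show "v i = v 1 * e 1 i"
      using z cvecs_out[OF v(1), of i] unfolding e_def by (cases "i \<in> {1..n+1}") auto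
  qed
  have "v 1 \<noteq> 0" using vv v(2) by auto
  then show ?thesis using pt_scale[of "v 1" "e 1"] vv by simp
qed

lemma qq_zero_iff:
  fixes n :: nat
  assumes v: "v \<in> cvecs {1..n+1}" "v \<noteq> (\<lambda>i. 0)"
  shows "qq {1..n+1} i v = 0 \<longleftrightarrow> v i = 0"
  using nn_pos[OF _ v] unfolding qq_def by simp

definition HH :: "nat \<Rightarrow> (nat \<Rightarrow> complex) set set" where
  "HH n = {pt v | v. v \<in> cvecs {1..n+1} \<and> v \<noteq> (\<lambda>i. 0) \<and> v (n+1) = 0}"

lemma pspan_HH:
  fixes n :: nat
  shows "pspan {1..n+1} {pt (e k) | k. k \<in> {1..n}} = HH n"
proof -
  have cs: "v \<in> cspan (\<Union>{pt (e k) | k. k \<in> {1..n}}) \<longleftrightarrow> v (n+1) = 0" if v: "v \<in> cvecs {1..n+1}" for v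
  proof
    assume "v \<in> cspan (\<Union>{pt (e k) | k. k \<in> {1..n}})"
    then obtain F c where F: "finite F" "F \<subseteq> \<Union>{pt (e k) | k. k \<in> {1..n}}" "v = (\<lambda>i. \<Sum>w\<in>F. c w * w i)"
      unfolding cspan_def by auto
    have "w (n+1) = 0" if "w \<in> F" for w
    proof -
      obtain k d where "k \<in> {1..n}" "w = (\<lambda>i. d * e k i)" using F(2) \<open>w \<in> F\<close> unfolding pt_def by blast
      then show ?thesis unfolding e_def by auto
    qed
    then show "v (n+1) = 0" unfolding F(3) by (auto intro!: sum.neutral)
  next
    assume v0: "v (n+1) = 0"
    define F where "F = e ` {1..n}"
    define c where "c w = (\<Sum>j\<in>{1..n}. w j * v j)" for w :: "nat \<Rightarrow> complex"
    have inj: "inj_on e {1..n}" unfolding inj_on_def e_def by (metis zero_neq_one)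
    have ce: "c (e k) = v k" if "k \<in> {1..n}" for k
    proof -
      have "c (e k) = (\<Sum>j\<in>{1..n}. if j = k then v j else 0)" unfolding c_def e_def
        by (rule sum.cong) auto
      then show ?thesis using that by simp
    qed
    have "v = (\<lambda>i. \<Sum>w\<in>F. c w * w i)"
    proof
      fix i
      have "(\<Sum>w\<in>F. c w * w i) = (\<Sum>k\<in>{1..n}. c (e k) * e k i)" unfolding F_def using sum.reindex[OF inj, of "\<lambda>w. c w * w i"] by simp
      also have "\<dots> = (\<Sum>k\<in>{1..n}. v k * e k i)" by (rule sum.cong) (auto simp: ce)
      also have "\<dots> = (if i \<in> {1..n} then v i else 0)" unfolding e_def
        by (simp add: if_distrib sum.delta cong: if_cong)
      also have "\<dots> = v i" using v0 cvecs_out[OF v, of i] by (cases "i = n+1") auto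
      finally show "v i = (\<Sum>w\<in>F. c w * w i)" ..
    qed
    moreover have "F \<subseteq> \<Union>{pt (e k) | k. k \<in> {1..n}}" unfolding F_def using pt_self by blast
    ultimately show "v \<in> cspan (\<Union>{pt (e k) | k. k \<in> {1..n}})" unfolding cspan_def F_def by blast
  qed
  show ?thesis unfolding pspan_def HH_def using cs by blast
qed

lemma HH_Q: "HH n = {p \<in> PS {1..n+1}. Q {1..n+1} (n+1) p = 0}"
proof (intro equalityI subsetI)
  fix p assume "p \<in> HH n"
  then obtain v where v: "v \<in> cvecs {1..n+1}" "v \<noteq> (\<lambda>i. 0)" "v (n+1) = 0" "p = pt v" unfolding HH_def by auto
  then show "p \<in> {p \<in> PS {1..n+1}. Q {1..n+1} (n+1) p = 0}" unfolding PS_iff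
    using qq_zero_iff[OF v(1,2)] by (auto simp: Q_pt)
next
  fix p assume "p \<in> {p \<in> PS {1..n+1}. Q {1..n+1} (n+1) p = 0}"
  then obtain v where v: "v \<in> cvecs {1..n+1}" "v \<noteq> (\<lambda>i. 0)" "p = pt v" "qq {1..n+1} (n+1) v = 0"
    unfolding PS_iff by (auto simp: Q_pt)
  then show "p \<in> HH n" unfolding HH_def using qq_zero_iff[OF v(1,2)] by auto
qed

definition hp :: "nat \<Rightarrow> (nat \<Rightarrow> complex) \<Rightarrow> (nat \<Rightarrow> complex) \<Rightarrow> complex" where
  "hp n a v = (\<Sum>i\<in>{1..n+1}. a i * v i)"

lemma hyperplane_eq:
  "hyperplane {1..n+1} a = {pt v | v. v \<in> cvecs {1..n+1} \<and> v \<noteq> (\<lambda>i. 0) \<and> hp n a v = 0}"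
proof -
  have "(\<forall>x\<in>pt v. hp n a x = 0) \<longleftrightarrow> hp n a v = 0" for v
  proof
    assume "\<forall>x\<in>pt v. hp n a x = 0" then show "hp n a v = 0" using pt_self by blast
  next
    assume h: "hp n a v = 0"
    show "\<forall>x\<in>pt v. hp n a x = 0"
    proof
      fix x assume "x \<in> pt v"
      then obtain c where "x = (\<lambda>i. c * v i)" unfolding pt_def by auto
      then have "hp n a x = c * hp n a v" unfolding hp_def by (simp add: sum_distrib_left algebra_simps)
      then show "hp n a x = 0" using h by simp
    qed
  qed
  then show ?thesis unfolding hyperplane_def hp_def[symmetric] PS_iff by auto
qed

lemma T_out: "i \<notin> {1..n+1} \<Longrightarrow> T n k w i = 0"
  using cvecs_out[OF T_cvecs] by blast

lemma Tb:
  fixes n d i :: nat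
  assumes w: "w \<in> cvecs {1..n+1}" "\<forall>j. d+1 < j \<longrightarrow> w j = 0" and s: "\<forall>j. cmod (w j) \<le> s"
    and dn: "d \<le> n" and i: "1 \<le> i"
  shows "cmod (T n k w i) \<le> (\<Sum>r<Suc d. cmod (of_int k gchoose r :: complex)) * s"
proof (cases "i \<in> {1..n+1}")
  case False
  have "0 \<le> s" using s norm_ge_zero order_trans by blast
  then show ?thesis using T_out[OF False] by (simp add: sum_nonneg)
next
  case True
  have "T n k w i = (\<Sum>r\<le>n. (of_int k gchoose r) * w (i + r))" using True unfolding T_def by simp
  also have "\<dots> = (\<Sum>r<Suc d. (of_int k gchoose r) * w (i + r))"
  proof (rule sum.mono_neutral_right)
    show "\<forall>r\<in>{..n} - {..<Suc d}. (of_int k gchoose r) * w (i + r) = 0"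
    proof
      fix r assume "r \<in> {..n} - {..<Suc d}"
      then have "d + 1 < i + r" using i by auto
      then show "(of_int k gchoose r) * w (i + r) = 0" using w(2) by simp
    qed
  qed (use dn in auto)
  finally have eq: "T n k w i = (\<Sum>r<Suc d. (of_int k gchoose r) * w (i + r))" .
  have "cmod (T n k w i) \<le> (\<Sum>r<Suc d. cmod ((of_int k gchoose r) * w (i + r)))" unfolding eq by (rule norm_sum)
  also have "\<dots> \<le> (\<Sum>r<Suc d. cmod (of_int k gchoose r :: complex) * s)"
    by (rule sum_mono) (simp add: norm_mult mult_left_mono s)
  also have "\<dots> = (\<Sum>r<Suc d. cmod (of_int k gchoose r :: complex)) * s" by (rule sum_distrib_right[symmetric])
  finally show ?thesis .
qed

lemma Tb2:
  fixes n d i :: nat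
  assumes w: "w \<in> cvecs {1..n+1}" "\<forall>j. d+1 < j \<longrightarrow> w j = 0" and s: "\<forall>j. cmod (w j) \<le> s"
    and dn: "d \<le> n" and i: "2 \<le> i"
  shows "cmod (T n k w i) \<le> (\<Sum>r<d. cmod (of_int k gchoose r :: complex)) * s"
proof (cases "i \<in> {1..n+1}")
  case False
  have "0 \<le> s" using s norm_ge_zero order_trans by blast
  then show ?thesis using T_out[OF False] by (simp add: sum_nonneg)
next
  case True
  have "T n k w i = (\<Sum>r\<le>n. (of_int k gchoose r) * w (i + r))" using True unfolding T_def by simp
  also have "\<dots> = (\<Sum>r<d. (of_int k gchoose r) * w (i + r))"
  proof (rule sum.mono_neutral_right)
    show "\<forall>r\<in>{..n} - {..<d}. (of_int k gchoose r) * w (i + r) = 0"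
    proof
      fix r assume "r \<in> {..n} - {..<d}"
      then have "d + 1 < i + r" using i by auto
      then show "(of_int k gchoose r) * w (i + r) = 0" using w(2) by simp
    qed
  qed (use dn in auto)
  finally have "cmod (T n k w i) \<le> (\<Sum>r<d. cmod ((of_int k gchoose r) * w (i + r)))" by (simp add: norm_sum)
  also have "\<dots> \<le> (\<Sum>r<d. cmod (of_int k gchoose r :: complex) * s)"
    by (rule sum_mono) (simp add: norm_mult mult_left_mono s)
  also have "\<dots> = (\<Sum>r<d. cmod (of_int k gchoose r :: complex)) * s" by (simp add: sum_distrib_right)
  finally show ?thesis .
qed

lemma T1d:
  fixes n d :: nat
  assumes w: "\<forall>j. d+1 < j \<longrightarrow> w j = 0" and dn: "d \<le> n"
  shows "T n k w 1 = (\<Sum>r<d. (of_int k gchoose r) * w (1 + r)) + (of_int k gchoose d) * w (d+1)"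
proof -
  have "T n k w 1 = (\<Sum>r\<le>n. (of_int k gchoose r) * w (1 + r))" unfolding T_def by simp
  also have "\<dots> = (\<Sum>r<Suc d. (of_int k gchoose r) * w (1 + r))"
    by (rule sum.mono_neutral_right) (use dn w in auto)
  also have "\<dots> = (\<Sum>r<d. (of_int k gchoose r) * w (1 + r)) + (of_int k gchoose d) * w (d+1)" by simp
  finally show ?thesis .
qed

lemma hp_bound:
  fixes n :: nat
  assumes "\<forall>i\<in>{1..n+1}. cmod (x i) \<le> b"
  shows "cmod (hp n a x) \<le> (\<Sum>i\<in>{1..n+1}. cmod (a i)) * b"
proof -
  have "cmod (hp n a x) \<le> (\<Sum>i\<in>{1..n+1}. cmod (a i) * cmod (x i))" unfolding hp_def
    by (rule order_trans[OF norm_sum]) (simp add: norm_mult)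
  also have "\<dots> \<le> (\<Sum>i\<in>{1..n+1}. cmod (a i) * b)" by (rule sum_mono) (use assms in \<open>auto intro: mult_left_mono\<close>)
  also have "\<dots> = (\<Sum>i\<in>{1..n+1}. cmod (a i)) * b" by (rule sum_distrib_right[symmetric])
  finally show ?thesis .
qed

lemma hp_add: "hp n a (\<lambda>i. x i + y i) = hp n a x + hp n a y"
  unfolding hp_def by (simp add: algebra_simps sum.distrib)

lemma hp_scale: "hp n a (\<lambda>i. c * x i) = c * hp n a x"
  unfolding hp_def by (simp add: algebra_simps sum_distrib_left)

definition sv :: "nat \<Rightarrow> (nat \<Rightarrow> complex) \<Rightarrow> nat \<Rightarrow> (nat \<Rightarrow> complex) \<Rightarrow> complex" where
  "sv n a m u = - hp n a (T n (- int m) u) / hp n a (T n (- int m) (e (n+1)))"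

definition vv :: "nat \<Rightarrow> (nat \<Rightarrow> complex) \<Rightarrow> nat \<Rightarrow> (nat \<Rightarrow> complex) \<Rightarrow> (nat \<Rightarrow> complex)" where
  "vv n a m u = T n (- int m) (\<lambda>i. u i + sv n a m u * e (n+1) i)"

lemma part2_ii_est:
  fixes n :: nat
  assumes n: "n \<ge> 1" and a1: "a 1 \<noteq> 0" and eps: "\<epsilon> > 0"
  shows "\<exists>N::nat. \<forall>m\<ge>N. \<forall>u. u \<in> cvecs {1..n+1} \<longrightarrow> u (n+1) = 0 \<longrightarrow> nn {1..n+1} u = 1 \<longrightarrow>
     hp n a (T n (- int m) (e (n+1))) \<noteq> 0 \<and> cmod (sv n a m u) \<le> \<epsilon>"
proof -
  define A where "A = (\<Sum>i\<in>{1..n+1}. cmod (a i))"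
  have A1: "cmod (a 1) \<le> A" unfolding A_def by (rule member_le_sum) auto
  have Apos: "A > 0" using A1 a1 by (meson order_less_le_trans zero_less_norm_iff)
  obtain N0 where N0: "\<forall>k::int. N0 \<le> real_of_int \<bar>k\<bar> \<longrightarrow>
        (A * (1 + 1/\<epsilon>)) * (\<Sum>r<n. cmod (of_int k gchoose r :: complex)) \<le> cmod (a 1) * cmod (of_int k gchoose n :: complex)"
    using growth[OF n order_refl, of "cmod (a 1)" "A * (1 + 1/\<epsilon>)"] a1 by auto
  show ?thesis
  proof (intro exI[of _ "nat \<lceil>N0\<rceil>"] allI impI conjI)
    fix m u assume m: "nat \<lceil>N0\<rceil> \<le> m" and u: "u \<in> cvecs {1..n+1}" "u (n+1) = 0" "nn {1..n+1} u = 1"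
    define k where "k = - int m"
    have kN: "N0 \<le> real_of_int \<bar>k\<bar>" using m unfolding k_def by linarith
    define B where "B = (\<Sum>r<n. cmod (of_int k gchoose r :: complex))"
    have B1: "B \<ge> 1" unfolding B_def using n
      by (subst sum.remove[of _ 0]) (auto intro: sum_nonneg)
    have G: "(A * (1 + 1/\<epsilon>)) * B \<le> cmod (a 1) * cmod (of_int k gchoose n :: complex)"
      using N0 kN unfolding B_def by blast
    have us: "\<forall>j. cmod (u j) \<le> 1" using coord_le_nrm[OF u(1)] u(3) by simp
    have usupp: "\<forall>j. (n-1)+1 < j \<longrightarrow> u j = 0"
    proof (intro allI impI)
      fix j assume j: "(n-1)+1 < j"
      show "u j = 0"
      proof (cases "j = n+1")
        case True then show ?thesis using u(2) by simp
      next
        case False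
        then have "j \<notin> {1..n+1}" using j n by auto
        then show ?thesis using cvecs_out[OF u(1)] by simp
      qed
    qed
    have num: "cmod (hp n a (T n k u)) \<le> A * B"
    proof -
      have "\<forall>i\<in>{1..n+1}. cmod (T n k u i) \<le> B * 1"
        using Tb[OF u(1) usupp us, where k=k] n unfolding B_def by auto
      then show ?thesis using hp_bound[of n "T n k u" "B * 1" a] unfolding A_def by simp
    qed
    define E where "E = e (n+1)"
    have E: "E \<in> cvecs {1..n+1}" "\<forall>j. n+1 < j \<longrightarrow> E j = 0" "\<forall>j. cmod (E j) \<le> 1"
      unfolding E_def e_def cvecs_def by auto
    have TE1: "T n k E 1 = of_int k gchoose n"
    proof -
      have "T n k E 1 = (\<Sum>r<n. (of_int k gchoose r) * E (1 + r)) + (of_int k gchoose n) * E (n+1)"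
        by (rule T1d) (use E in auto)
      moreover have "E (1 + r) = 0" if "r < n" for r using that unfolding E_def e_def by simp
      ultimately show ?thesis unfolding E_def e_def by simp
    qed
    have TEi: "cmod (T n k E i) \<le> B" if "i \<in> {2..n+1}" for i
      using Tb2[OF E(1,2,3) order_refl, where i=i and k=k] that unfolding B_def by simp
    have den: "cmod (a 1) * cmod (of_int k gchoose n :: complex) - A * B \<le> cmod (hp n a (T n k E))"
    proof -
      have split: "hp n a (T n k E) = a 1 * T n k E 1 + (\<Sum>i\<in>{2..n+1}. a i * T n k E i)"
        unfolding hp_def by (subst sum.atLeast_Suc_atMost) (auto simp: numeral_2_eq_2)
      have "cmod (\<Sum>i\<in>{2..n+1}. a i * T n k E i) \<le> (\<Sum>i\<in>{2..n+1}. cmod (a i) * B)"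
        by (rule order_trans[OF norm_sum sum_mono]) (auto simp: norm_mult intro!: mult_left_mono TEi)
      also have "\<dots> \<le> A * B" unfolding A_def sum_distrib_right[symmetric] using B1
        by (intro mult_right_mono sum_mono2) auto
      finally have "cmod (\<Sum>i\<in>{2..n+1}. a i * T n k E i) \<le> A * B" .
      moreover have "cmod (a 1 * T n k E 1) - cmod (\<Sum>i\<in>{2..n+1}. a i * T n k E i) \<le> cmod (hp n a (T n k E))"
        unfolding split using norm_triangle_ineq2[of "a 1 * T n k E 1" "- (\<Sum>i\<in>{2..n+1}. a i * T n k E i)"]
        by simp
      ultimately show ?thesis unfolding TE1 norm_mult by simp
    qed
    have den2: "A * B / \<epsilon> \<le> cmod (hp n a (T n k E))"
    proof -
      have "(A * (1 + 1/\<epsilon>)) * B = A * B + A * B / \<epsilon>" using eps by (simp add: field_simps)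
      then show ?thesis using den G by linarith
    qed
    have pos: "A * B / \<epsilon> > 0" using Apos B1 eps by simp
    then show "hp n a (T n (- int m) (e (n+1))) \<noteq> 0" using den2 unfolding k_def E_def by auto
    have "cmod (sv n a m u) = cmod (hp n a (T n k u)) / cmod (hp n a (T n k E))"
      unfolding sv_def k_def E_def by (simp add: norm_divide)
    also have "\<dots> \<le> (A * B) / (A * B / \<epsilon>)"
      using num den2 pos Apos B1 by (intro frac_le) auto
    also have "\<dots> = \<epsilon>" using Apos B1 eps by simp
    finally show "cmod (sv n a m u) \<le> \<epsilon>" .
  qed
qed

lemma part2_i_est:
  fixes n :: nat
  assumes n: "n \<ge> 1" and a1: "a 1 \<noteq> 0" and rho: "\<rho> > 0"
  shows "\<exists>N::nat. \<forall>m\<ge>N. \<forall>v. v \<in> cvecs {1..n+1} \<longrightarrow> v \<noteq> (\<lambda>i. 0) \<longrightarrow> hp n a v = 0 \<longrightarrow>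
     (cmod (T n (int m) v (n+1)))^2 < \<rho>^2 * nn {1..n+1} (T n (int m) v)"
proof -
  define A where "A = (\<Sum>i\<in>{1..n+1}. cmod (a i))"
  have A1: "cmod (a 1) \<le> A" unfolding A_def by (rule member_le_sum) auto
  have Apos: "A > 0" using A1 a1 by (meson order_less_le_trans zero_less_norm_iff)
  define \<epsilon> where "\<epsilon> = (cmod (a 1) / (2 * A))^2"
  have eps: "\<epsilon> > 0" unfolding \<epsilon>_def using a1 Apos by simp
  have seps: "sqrt \<epsilon> = cmod (a 1) / (2 * A)" unfolding \<epsilon>_def using Apos by simp
  obtain N0 where N0: "\<forall>k::int. N0 \<le> real_of_int \<bar>k\<bar> \<longrightarrow> (\<forall>w. w \<in> cvecs {1..n+1} \<longrightarrow> (\<forall>i. n+1 < i \<longrightarrow> w i = 0) \<longrightarrow>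
     \<rho>^2 * nn {1..n+1} w \<le> (cmod (w (n+1)))^2 \<longrightarrow>
     (\<Sum>i\<in>{2..n+1}. (cmod (T n k w i))^2) \<le> \<epsilon> * (cmod (T n k w 1))^2)"
    using lemU[OF order_refl rho eps, of n] by blast
  show ?thesis
  proof (intro exI[of _ "nat \<lceil>N0\<rceil>"] allI impI)
    fix m v assume m: "nat \<lceil>N0\<rceil> \<le> m" and v: "v \<in> cvecs {1..n+1}" "v \<noteq> (\<lambda>i. 0)" "hp n a v = 0"
    define w where "w = T n (int m) v"
    show "(cmod (T n (int m) v (n+1)))^2 < \<rho>^2 * nn {1..n+1} (T n (int m) v)"
    proof (rule ccontr)
      assume "\<not> ?thesis"
      then have c: "\<rho>^2 * nn {1..n+1} w \<le> (cmod (w (n+1)))^2" unfolding w_def by simp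
      have kN: "N0 \<le> real_of_int \<bar>- int m\<bar>" using m by linarith
      have w1: "w \<in> cvecs {1..n+1}" "\<forall>i. n+1 < i \<longrightarrow> w i = 0" unfolding w_def
        using T_cvecs cvecs_out[OF T_cvecs] by auto
      have Tw: "T n (- int m) w = v" unfolding w_def by (rule T_inv[OF v(1)])
      have S: "(\<Sum>i\<in>{2..n+1}. (cmod (v i))^2) \<le> \<epsilon> * (cmod (v 1))^2"
        using N0 kN w1 c unfolding Tw[symmetric] by blast
      have vi: "cmod (v i) \<le> sqrt \<epsilon> * cmod (v 1)" if i: "i \<in> {2..n+1}" for i
      proof -
        have "(cmod (v i))^2 \<le> (\<Sum>i\<in>{2..n+1}. (cmod (v i))^2)" by (rule member_le_sum[OF i]) auto
        then have "(cmod (v i))^2 \<le> \<epsilon> * (cmod (v 1))^2" using S by linarith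
        then have "sqrt ((cmod (v i))^2) \<le> sqrt (\<epsilon> * (cmod (v 1))^2)" by (rule real_sqrt_le_mono)
        then show ?thesis by (simp add: real_sqrt_mult)
      qed
      have split: "hp n a v = a 1 * v 1 + (\<Sum>i\<in>{2..n+1}. a i * v i)"
        unfolding hp_def by (subst sum.atLeast_Suc_atMost) (auto simp: numeral_2_eq_2)
      have "cmod (a 1 * v 1) = cmod (\<Sum>i\<in>{2..n+1}. a i * v i)"
        using split v(3) by (metis add_eq_0_iff norm_minus_cancel)
      also have "\<dots> \<le> (\<Sum>i\<in>{2..n+1}. cmod (a i) * (sqrt \<epsilon> * cmod (v 1)))"
      proof (rule order_trans[OF norm_sum sum_mono])
        fix i assume i: "i \<in> {2..n+1}"
        show "cmod (a i * v i) \<le> cmod (a i) * (sqrt \<epsilon> * cmod (v 1))"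
          unfolding norm_mult by (rule mult_left_mono[OF vi[OF i]]) simp
      qed
      also have "\<dots> \<le> A * (sqrt \<epsilon> * cmod (v 1))" unfolding A_def sum_distrib_right[symmetric]
        using eps by (intro mult_right_mono sum_mono2) auto
      also have "\<dots> = cmod (a 1) * cmod (v 1) / 2" unfolding seps using Apos by simp
      finally have "cmod (a 1) * cmod (v 1) \<le> cmod (a 1) * cmod (v 1) / 2" by (simp add: norm_mult)
      then have v10: "v 1 = 0" using a1 by (simp add: mult_le_0_iff)
      then have "(\<Sum>i\<in>{2..n+1}. (cmod (v i))^2) \<le> 0" using S by simp
      then have "(\<Sum>i\<in>{2..n+1}. (cmod (v i))^2) = 0" by (intro antisym sum_nonneg) auto
      then have z: "\<forall>i\<in>{2..n+1}. (cmod (v i))^2 = 0" by (subst (asm) sum_nonneg_eq_0_iff) auto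
      have "v = (\<lambda>i. 0)"
      proof
        fix i show "v i = 0"
        proof (cases "i \<in> {2..n+1}")
          case True then show ?thesis using z by simp
        next
          case False
          then have "i = 1 \<or> i \<notin> {1..n+1}" by auto
          then show ?thesis using v10 cvecs_out[OF v(1)] by auto
        qed
      qed
      then show False using v(2) by simp
    qed
  qed
qed

lemma hdist_le:
  assumes A: "A \<noteq> {}" "A \<subseteq> PS I" and B: "B \<noteq> {}" "B \<subseteq> PS I"
    and AB: "\<forall>x\<in>A. \<exists>y\<in>B. pdist I x y \<le> \<delta>" and BA: "\<forall>y\<in>B. \<exists>x\<in>A. pdist I x y \<le> \<delta>"
  shows "0 \<le> hdist I A B \<and> hdist I A B \<le> \<delta>"
proof -
  define f where "f x = (INF b\<in>B. pdist I x b)" for x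
  define g where "g y = (INF a\<in>A. pdist I a y)" for y
  have f0: "0 \<le> f x" if "x \<in> A" for x unfolding f_def
    using that A B by (intro cINF_greatest) (auto intro!: pdist_nonneg)
  have fd: "f x \<le> \<delta>" if x: "x \<in> A" for x
  proof -
    obtain y where y: "y \<in> B" "pdist I x y \<le> \<delta>" using AB x by blast
    have "bdd_below ((\<lambda>b. pdist I x b) ` B)" using x A B by (intro bdd_belowI[of _ 0]) (auto intro!: pdist_nonneg)
    then show ?thesis unfolding f_def using y by (intro cINF_lower2) auto
  qed
  have g0: "0 \<le> g y" if "y \<in> B" for y unfolding g_def
    using that A B by (intro cINF_greatest) (auto intro!: pdist_nonneg)
  have gd: "g y \<le> \<delta>" if y: "y \<in> B" for y
  proof -
    obtain x where x: "x \<in> A" "pdist I x y \<le> \<delta>" using BA y by blast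
    have "bdd_below ((\<lambda>a. pdist I a y) ` A)" using y A B by (intro bdd_belowI[of _ 0]) (auto intro!: pdist_nonneg)
    then show ?thesis unfolding g_def using x by (intro cINF_lower2) auto
  qed
  obtain x0 where x0: "x0 \<in> A" using A by blast
  obtain y0 where y0: "y0 \<in> B" using B by blast
  have S1: "0 \<le> (SUP x\<in>A. f x) \<and> (SUP x\<in>A. f x) \<le> \<delta>"
  proof
    have "bdd_above (f ` A)" using fd by (intro bdd_aboveI[of _ \<delta>]) auto
    then show "0 \<le> (SUP x\<in>A. f x)" using x0 f0 by (intro cSUP_upper2) auto
    show "(SUP x\<in>A. f x) \<le> \<delta>" using A fd by (intro cSUP_least) auto
  qed
  have S2: "0 \<le> (SUP y\<in>B. g y) \<and> (SUP y\<in>B. g y) \<le> \<delta>"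
  proof
    have "bdd_above (g ` B)" using gd by (intro bdd_aboveI[of _ \<delta>]) auto
    then show "0 \<le> (SUP y\<in>B. g y)" using y0 g0 by (intro cSUP_upper2) auto
    show "(SUP y\<in>B. g y) \<le> \<delta>" using B gd by (intro cSUP_least) auto
  qed
  have "hdist I A B = max (SUP x\<in>A. f x) (SUP y\<in>B. g y)" unfolding hdist_def f_def g_def ..
  then show ?thesis using S1 S2 by (auto simp: max_def)
qed

lemma Am_eq:
  "(pmap {1..n+1} (jordan1 n) ^^ m) ` hyperplane {1..n+1} a
     = {pt (T n (int m) v) | v. v \<in> cvecs {1..n+1} \<and> v \<noteq> (\<lambda>i. 0) \<and> hp n a v = 0}"
  unfolding hyperplane_eq using Fpow_pt by blast

lemma hp_e: "k \<in> {1..n+1} \<Longrightarrow> hp n a (e k) = a k"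
proof -
  assume k: "k \<in> {1..n+1}"
  have "hp n a (e k) = (\<Sum>i\<in>{1..n+1}. if i = k then a i else 0)" unfolding hp_def e_def
    by (rule sum.cong) auto
  then show ?thesis using k by simp
qed

lemma nrm_e: "k \<in> {1..n+1} \<Longrightarrow> nrm {1..n+1} (e k) = 1"
proof -
  assume k: "k \<in> {1..n+1}"
  have "nn {1..n+1} (e k) = (\<Sum>i\<in>{1..n+1}. if i = k then 1 else 0)" unfolding nn_def e_def
    by (rule sum.cong) auto
  then show ?thesis using k unfolding nrm_def by simp
qed

lemma hyperplane_ne:
  fixes n :: nat
  assumes n: "n \<ge> 1" and a1: "a 1 \<noteq> 0"
  shows "hyperplane {1..n+1} a \<noteq> {}"
proof -
  define v where "v = (\<lambda>i. a 2 * e 1 i + (- a 1) * e 2 i)"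
  have v: "v \<in> cvecs {1..n+1}" unfolding v_def e_def cvecs_def using n by auto
  have "v 2 = - a 1" unfolding v_def e_def by simp
  then have v0: "v \<noteq> (\<lambda>i. 0)" using a1 by (auto dest: fun_cong[of _ _ 2])
  have "hp n a v = a 2 * a 1 + (- a 1) * a 2" unfolding v_def hp_add hp_scale
    using hp_e[of 1 n a] hp_e[of 2 n a] n by simp
  then have "hp n a v = 0" by simp
  then show ?thesis unfolding hyperplane_eq using v v0 by blast
qed

lemma HH_ne: "n \<ge> 1 \<Longrightarrow> pt (e 1) \<in> HH n"
  unfolding HH_def using e_cvecs[of 1 "{1..n+1}"] e_nonzero[of 1] by (auto simp: e_def)

lemma HH_sub: "HH n \<subseteq> PS {1..n+1}"
proof
  fix x assume "x \<in> HH n"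
  then obtain v where v: "v \<in> cvecs {1..n+1}" "v \<noteq> (\<lambda>i. 0)" "x = pt v" unfolding HH_def by blast
  then show "x \<in> PS {1..n+1}" unfolding PS_iff by blast
qed

lemma Am_sub: "(pmap {1..n+1} (jordan1 n) ^^ m) ` hyperplane {1..n+1} a \<subseteq> PS {1..n+1}"
proof
  fix x assume "x \<in> (pmap {1..n+1} (jordan1 n) ^^ m) ` hyperplane {1..n+1} a"
  then obtain v where v: "v \<in> cvecs {1..n+1}" "v \<noteq> (\<lambda>i. 0)" "x = pt (T n (int m) v)"
    unfolding Am_eq by blast
  then show "x \<in> PS {1..n+1}" unfolding PS_iff using T_cvecs T_nonzero[OF v(1,2)] by blast
qed

lemma bound_i:
  fixes n :: nat
  assumes n: "n \<ge> 1" and a1: "a 1 \<noteq> 0" and d: "\<delta> > 0"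
  shows "\<exists>N::nat. \<forall>m\<ge>N. \<forall>x\<in>(pmap {1..n+1} (jordan1 n) ^^ m) ` hyperplane {1..n+1} a.
            \<exists>y\<in>HH n. pdist {1..n+1} x y \<le> \<delta>"
proof -
  define \<rho> where "\<rho> = min (1/2) (\<delta>/4)"
  have rho: "\<rho> > 0" "\<rho> \<le> 1/2" "4 * \<rho> \<le> \<delta>" unfolding \<rho>_def using d by auto
  obtain N where N: "\<forall>m\<ge>N. \<forall>v. v \<in> cvecs {1..n+1} \<longrightarrow> v \<noteq> (\<lambda>i. 0) \<longrightarrow> hp n a v = 0 \<longrightarrow>
     (cmod (T n (int m) v (n+1)))^2 < \<rho>^2 * nn {1..n+1} (T n (int m) v)"
    using part2_i_est[where a=a, OF n a1 rho(1)] by blast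
  show ?thesis
  proof (intro exI[of _ N] allI impI ballI)
    fix m x assume m: "N \<le> m" and "x \<in> (pmap {1..n+1} (jordan1 n) ^^ m) ` hyperplane {1..n+1} a"
    then obtain v where v: "v \<in> cvecs {1..n+1}" "v \<noteq> (\<lambda>i. 0)" "hp n a v = 0" "x = pt (T n (int m) v)"
      unfolding Am_eq by blast
    define w where "w = T n (int m) v"
    have wc: "w \<in> cvecs {1..n+1}" "w \<noteq> (\<lambda>i. 0)" unfolding w_def using T_cvecs T_nonzero[OF v(1,2)] by auto
    have wlt: "(cmod (w (n+1)))^2 < \<rho>^2 * nn {1..n+1} w" using N m v unfolding w_def by blast
    define w' where "w' = (\<lambda>i. if i = n+1 then 0 else w i)"
    have w'c: "w' \<in> cvecs {1..n+1}" using wc(1) unfolding w'_def cvecs_def by auto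
    have nsplit: "nn {1..n+1} w = nn {1..n+1} w' + (cmod (w (n+1)))^2"
    proof -
      have "nn {1..n+1} w = (cmod (w (n+1)))^2 + (\<Sum>i\<in>{1..n+1} - {n+1}. (cmod (w i))^2)"
        unfolding nn_def by (subst sum.remove[of _ "n+1"]) auto
      moreover have "nn {1..n+1} w' = 0 + (\<Sum>i\<in>{1..n+1} - {n+1}. (cmod (w i))^2)"
        unfolding nn_def w'_def by (subst sum.remove[of _ "n+1"]) (auto intro!: sum.cong)
      ultimately show ?thesis by simp
    qed
    have npos: "nn {1..n+1} w > 0" using nn_pos[OF _ wc] by simp
    have "nn {1..n+1} w' > 0"
    proof -
      have "\<rho>^2 \<le> (1/2)^2" using rho by (intro power_mono) auto
      then have "\<rho>^2 \<le> 1/4" by (simp add: power2_eq_square)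
      then have "\<rho>^2 * nn {1..n+1} w \<le> nn {1..n+1} w / 4" using npos by simp
      then show ?thesis using nsplit wlt npos by linarith
    qed
    then have w'0: "w' \<noteq> (\<lambda>i. 0)" unfolding nn_def by auto
    have y: "pt w' \<in> HH n" unfolding HH_def w'_def using w'c w'0 unfolding w'_def by auto
    have diff: "nrm {1..n+1} (\<lambda>i. w i - w' i) = cmod (w (n+1))"
    proof -
      have "nn {1..n+1} (\<lambda>i. w i - w' i) = (\<Sum>i\<in>{1..n+1}. if i = n+1 then (cmod (w (n+1)))^2 else 0)"
        unfolding nn_def w'_def by (rule sum.cong) auto
      then show ?thesis unfolding nrm_def by simp
    qed
    have lt: "cmod (w (n+1)) < \<rho> * nrm {1..n+1} w"
    proof -
      have "sqrt ((cmod (w (n+1)))^2) < sqrt (\<rho>^2 * nn {1..n+1} w)" using wlt by (rule real_sqrt_less_mono)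
      then show ?thesis using rho unfolding nrm_def by (simp add: real_sqrt_mult)
    qed
    have nrmpos: "nrm {1..n+1} w > 0" unfolding nrm_def using npos by simp
    have "pdist {1..n+1} x (pt w') = Dv {1..n+1} w w'" unfolding v(4) w_def[symmetric] pdist_pt ..
    also have "\<dots> \<le> 4 * nrm {1..n+1} (\<lambda>i. w i - w' i) / nrm {1..n+1} w"
      by (rule Dv_bound) (use npos \<open>nn {1..n+1} w' > 0\<close> in auto)
    also have "\<dots> \<le> 4 * \<rho>" unfolding diff using lt nrmpos by (simp add: divide_le_eq)
    also have "\<dots> \<le> \<delta>" by (rule rho(3))
    finally show "\<exists>y\<in>HH n. pdist {1..n+1} x y \<le> \<delta>" using y by blast
  qed
qed

lemma normalize_vec:
  fixes n :: nat
  assumes v: "v \<in> cvecs {1..n+1}" "v \<noteq> (\<lambda>i. 0)"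
  shows "\<exists>u. u \<in> cvecs {1..n+1} \<and> nn {1..n+1} u = 1 \<and> pt u = pt v \<and> (\<exists>c. c \<noteq> 0 \<and> u = (\<lambda>i. c * v i))"
proof -
  have np: "nn {1..n+1} v > 0" using nn_pos[OF _ v] by simp
  define c where "c = complex_of_real (1 / sqrt (nn {1..n+1} v))"
  have c0: "c \<noteq> 0" unfolding c_def using np by simp
  define u where "u = (\<lambda>i. c * v i)"
  have "u \<in> cvecs {1..n+1}" using v(1) unfolding u_def cvecs_def by auto
  moreover have "nn {1..n+1} u = 1" unfolding u_def nn_scale c_def using np
    by (simp add: power_divide norm_divide)
  moreover have "pt u = pt v" unfolding u_def by (rule pt_scale[OF c0])
  ultimately show ?thesis using c0 unfolding u_def by blast
qed

lemma vv_props: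
  fixes n :: nat
  assumes n: "n \<ge> 1" and u: "u \<in> cvecs {1..n+1}" "u (n+1) = 0" "nn {1..n+1} u = 1"
    and den: "hp n a (T n (- int m) (e (n+1))) \<noteq> 0"
  shows "vv n a m u \<in> cvecs {1..n+1}" "vv n a m u \<noteq> (\<lambda>i. 0)" "hp n a (vv n a m u) = 0"
    "pdist {1..n+1} (pt (T n (int m) (vv n a m u))) (pt u) \<le> 4 * cmod (sv n a m u)"
proof -
  define s where "s = sv n a m u"
  define z where "z = (\<lambda>i. u i + s * e (n+1) i)"
  have ec: "e (n+1) \<in> cvecs {1..n+1}" by (rule e_cvecs) simp
  have zc: "z \<in> cvecs {1..n+1}" unfolding z_def using u(1) ec unfolding cvecs_def by auto
  have u0: "u \<noteq> (\<lambda>i. 0)" using u(3) unfolding nn_def by auto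
  then obtain j where j: "u j \<noteq> 0" by auto
  then have "j \<noteq> n+1" using u(2) by auto
  then have "z j = u j" unfolding z_def e_def by simp
  then have z0: "z \<noteq> (\<lambda>i. 0)" using j by auto
  have vvz: "vv n a m u = T n (- int m) z" unfolding vv_def z_def s_def ..
  show "vv n a m u \<in> cvecs {1..n+1}" unfolding vvz by (rule T_cvecs)
  show "vv n a m u \<noteq> (\<lambda>i. 0)" unfolding vvz by (rule T_nonzero[OF zc z0])
  have "hp n a (vv n a m u) = hp n a (T n (- int m) u) + s * hp n a (T n (- int m) (e (n+1)))"
    unfolding vvz z_def T_add T_scale hp_add hp_scale ..
  also have "\<dots> = 0" unfolding s_def sv_def using den by simp
  finally show "hp n a (vv n a m u) = 0" .
  have Tz: "T n (int m) (vv n a m u) = z" unfolding vvz using T_group[OF zc, of "int m" "- int m"] T_zero[OF zc] by simp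
  have nz: "nn {1..n+1} z > 0" using nn_pos[OF _ zc z0] by simp
  have "pdist {1..n+1} (pt (T n (int m) (vv n a m u))) (pt u) = Dv {1..n+1} u z"
    unfolding Tz pdist_pt Dv_sym[of _ z] ..
  also have "\<dots> \<le> 4 * nrm {1..n+1} (\<lambda>i. u i - z i) / nrm {1..n+1} u"
    by (rule Dv_bound) (use nz u(3) in auto)
  also have "nrm {1..n+1} (\<lambda>i. u i - z i) = cmod s"
  proof -
    have "(\<lambda>i. u i - z i) = (\<lambda>i. (- s) * e (n+1) i)" unfolding z_def by auto
    then show ?thesis using nrm_scale[of _ "- s" "e (n+1)"] nrm_e[of "n+1" n] by simp
  qed
  also have "nrm {1..n+1} u = 1" unfolding nrm_def u(3) by simp
  finally show "pdist {1..n+1} (pt (T n (int m) (vv n a m u))) (pt u) \<le> 4 * cmod (sv n a m u)"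
    unfolding s_def by simp
qed

lemma bound_ii:
  fixes n :: nat
  assumes n: "n \<ge> 1" and a1: "a 1 \<noteq> 0" and d: "\<delta> > 0"
  shows "\<exists>N::nat. \<forall>m\<ge>N. \<forall>y\<in>HH n. \<exists>x\<in>(pmap {1..n+1} (jordan1 n) ^^ m) ` hyperplane {1..n+1} a.
            pdist {1..n+1} x y \<le> \<delta>"
proof -
  obtain N where N: "\<forall>m\<ge>N. \<forall>u. u \<in> cvecs {1..n+1} \<longrightarrow> u (n+1) = 0 \<longrightarrow> nn {1..n+1} u = 1 \<longrightarrow>
     hp n a (T n (- int m) (e (n+1))) \<noteq> 0 \<and> cmod (sv n a m u) \<le> \<delta>/4"
    using part2_ii_est[where a=a, OF n a1, of "\<delta>/4"] d by auto
  show ?thesis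
  proof (intro exI[of _ N] allI impI ballI)
    fix m y assume m: "N \<le> m" and "y \<in> HH n"
    then obtain v where v: "v \<in> cvecs {1..n+1}" "v \<noteq> (\<lambda>i. 0)" "v (n+1) = 0" "y = pt v"
      unfolding HH_def by blast
    obtain u c where u: "u \<in> cvecs {1..n+1}" "nn {1..n+1} u = 1" "pt u = pt v" "c \<noteq> 0" "u = (\<lambda>i. c * v i)"
      using normalize_vec[OF v(1,2)] by blast
    have un: "u (n+1) = 0" using u(5) v(3) by simp
    have est: "hp n a (T n (- int m) (e (n+1))) \<noteq> 0" "cmod (sv n a m u) \<le> \<delta>/4"
      using N m u(1,2) un by auto
    note P = vv_props[OF n u(1) un u(2) est(1)]
    have "pt (T n (int m) (vv n a m u)) \<in> (pmap {1..n+1} (jordan1 n) ^^ m) ` hyperplane {1..n+1} a"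
      unfolding Am_eq using P(1-3) by blast
    moreover have "pdist {1..n+1} (pt (T n (int m) (vv n a m u))) y \<le> \<delta>"
      using P(4) est(2) unfolding v(4) u(3)[symmetric] by simp
    ultimately show "\<exists>x\<in>(pmap {1..n+1} (jordan1 n) ^^ m) ` hyperplane {1..n+1} a. pdist {1..n+1} x y \<le> \<delta>"
      by blast
  qed
qed

lemma part2:
  fixes n :: nat
  assumes n: "n \<ge> 1" and a1: "a 1 \<noteq> 0"
  shows "(\<lambda>m. hdist {1..n+1} ((pmap {1..n+1} (jordan1 n) ^^ m) ` hyperplane {1..n+1} a) (HH n)) \<longlonglongrightarrow> 0"
proof (rule LIMSEQ_I)
  fix r :: real assume r: "r > 0"
  obtain N1 where N1: "\<forall>m\<ge>N1. \<forall>x\<in>(pmap {1..n+1} (jordan1 n) ^^ m) ` hyperplane {1..n+1} a.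
            \<exists>y\<in>HH n. pdist {1..n+1} x y \<le> r/2"
    using bound_i[where a=a, OF n a1, of "r/2"] r by auto
  obtain N2 where N2: "\<forall>m\<ge>N2. \<forall>y\<in>HH n. \<exists>x\<in>(pmap {1..n+1} (jordan1 n) ^^ m) ` hyperplane {1..n+1} a.
            pdist {1..n+1} x y \<le> r/2"
    using bound_ii[where a=a, OF n a1, of "r/2"] r by auto
  show "\<exists>no. \<forall>m\<ge>no. norm (hdist {1..n+1} ((pmap {1..n+1} (jordan1 n) ^^ m) ` hyperplane {1..n+1} a) (HH n) - 0) < r"
  proof (intro exI[of _ "max N1 N2"] allI impI)
    fix m assume m: "max N1 N2 \<le> m"
    have "0 \<le> hdist {1..n+1} ((pmap {1..n+1} (jordan1 n) ^^ m) ` hyperplane {1..n+1} a) (HH n) \<and>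
        hdist {1..n+1} ((pmap {1..n+1} (jordan1 n) ^^ m) ` hyperplane {1..n+1} a) (HH n) \<le> r/2"
    proof (rule hdist_le)
      show "(pmap {1..n+1} (jordan1 n) ^^ m) ` hyperplane {1..n+1} a \<noteq> {}" using hyperplane_ne[where a=a, OF n a1] by simp
      show "HH n \<noteq> {}" using HH_ne[OF n] by blast
    qed (use N1 N2 m Am_sub HH_sub in auto)
    then show "norm (hdist {1..n+1} ((pmap {1..n+1} (jordan1 n) ^^ m) ` hyperplane {1..n+1} a) (HH n) - 0) < r"
      using r by simp
  qed
qed

lemma lim_lower:
  fixes X :: "nat \<Rightarrow> real"
  assumes X: "X \<longlonglongrightarrow> 0" and ev: "eventually (\<lambda>m. c - X m \<le> q) sequentially"
  shows "c \<le> q"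
proof -
  have "(\<lambda>m. c - X m) \<longlonglongrightarrow> c - 0" by (intro tendsto_intros X)
  then show ?thesis using tendsto_le[OF trivial_limit_sequentially tendsto_const _ ev] by simp
qed

lemma T_e1: "T n k (e 1) = e 1"
proof
  fix i
  show "T n k (e 1) i = e 1 i"
  proof (cases "i \<in> {1..n+1}")
    case True
    have "T n k (e 1) i = (\<Sum>r\<le>n. (of_int k gchoose r) * e 1 (i + r))" using True unfolding T_def by simp
    also have "\<dots> = (\<Sum>r\<le>n. if r = 0 \<and> i = 1 then 1 else 0)"
      by (rule sum.cong) (use True in \<open>auto simp: e_def\<close>)
    also have "\<dots> = e 1 i" unfolding e_def by (cases "i = 1") auto
    finally show ?thesis .
  next
    case False
    then show ?thesis using T_out[OF False] unfolding e_def by auto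
  qed
qed

abbreviation "PP n \<equiv> PS {1..n+1}"
abbreviation "dd n \<equiv> pdist {1..n+1}"
abbreviation "GG n \<equiv> cyclic (PS {1..n+1}) (pmap {1..n+1} (jordan1 n))"

lemma e1_in_Lambda:
  fixes n :: nat
  assumes n: "n \<ge> 1"
  shows "pt (e 1) \<in> LimLambda (PP n) (dd n) (GG n)"
proof -
  have e1: "e 1 \<in> cvecs {1..n+1}" by (rule e_cvecs) simp
  have P: "pt (e 1) \<in> PP n" unfolding PS_iff using e1 e_nonzero by blast
  have inj: "inj (\<lambda>m::nat. G n (int m))" using inj_compose[OF G_inj[OF n] inj_of_nat] by (simp add: comp_def)
  have mem: "\<forall>m. G n (int m) \<in> GG n" unfolding cyclic_G by auto
  have "G n (int m) (pt (e 1)) = pt (e 1)" for m using G_pt[OF e1 e_nonzero] T_e1 by simp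
  then have "mconv (dd n) (\<lambda>m. G n (int m) (pt (e 1))) (pt (e 1))"
    unfolding mconv_def using pdist_self[OF P] by simp
  then have "pt (e 1) \<in> {y \<in> PP n. \<exists>z\<in>PP n. \<exists>g. inj g \<and> (\<forall>m. g m \<in> GG n) \<and> mconv (dd n) (\<lambda>m. g m z) y}"
    using P inj mem by (intro CollectI conjI bexI[of _ "pt (e 1)"] exI[of _ "\<lambda>m. G n (int m)"])
  moreover have "{y \<in> PP n. \<exists>z\<in>PP n. \<exists>g. inj g \<and> (\<forall>m. g m \<in> GG n) \<and> mconv (dd n) (\<lambda>m. g m z) y} \<subseteq> PP n"
    by (rule subsetI, erule CollectE, erule conjunct1)
  ultimately show ?thesis unfolding LimLambda_def by (meson mclos_sup subsetD)
qed

lemma qq1_lower: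
  fixes n :: nat
  assumes w: "w \<in> cvecs {1..n+1}" "w \<noteq> (\<lambda>i. 0)" and eps: "\<epsilon> > 0"
    and S: "(\<Sum>i\<in>{2..n+1}. (cmod (w i))^2) \<le> \<epsilon> * (cmod (w 1))^2"
  shows "1 / (1 + \<epsilon>) \<le> qq {1..n+1} 1 w"
proof -
  have np: "nn {1..n+1} w > 0" using nn_pos[OF _ w] by simp
  have "nn {1..n+1} w = (cmod (w 1))^2 + (\<Sum>i\<in>{2..n+1}. (cmod (w i))^2)"
    unfolding nn_def by (subst sum.atLeast_Suc_atMost) (auto simp: numeral_2_eq_2)
  then have "nn {1..n+1} w \<le> (1 + \<epsilon>) * (cmod (w 1))^2" using S by (simp add: algebra_simps)
  then have le: "nn {1..n+1} w \<le> (1 + \<epsilon>) * (cmod (w 1))^2" .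
  have X: "(cmod (w 1))^2 > 0"
  proof (rule ccontr)
    assume "\<not> ?thesis"
    then have "(cmod (w 1))^2 = 0" by simp
    then show False using le np by simp
  qed
  have "1 / (1 + \<epsilon>) = (cmod (w 1))^2 / ((1 + \<epsilon>) * (cmod (w 1))^2)" using X by simp
  also have "\<dots> \<le> (cmod (w 1))^2 / nn {1..n+1} w"
    by (rule frac_le) (use X np le in auto)
  finally show ?thesis unfolding qq_def .
qed

lemma Lambda0_sub:
  fixes n :: nat
  assumes n: "n \<ge> 1"
  shows "{y \<in> PP n. \<exists>z\<in>PP n. \<exists>g. inj g \<and> (\<forall>m. g m \<in> GG n) \<and> mconv (dd n) (\<lambda>m. g m z) y}
     \<subseteq> {p \<in> PP n. Q {1..n+1} 1 p = 1}"
proof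
  fix y assume "y \<in> {y \<in> PP n. \<exists>z\<in>PP n. \<exists>g. inj g \<and> (\<forall>m. g m \<in> GG n) \<and> mconv (dd n) (\<lambda>m. g m z) y}"
  then obtain z g where y: "y \<in> PP n" and z: "z \<in> PP n" and g: "inj g" "\<forall>m. g m \<in> GG n"
    and conv: "mconv (dd n) (\<lambda>m. g m z) y" by blast
  obtain \<kappa> where \<kappa>: "inj \<kappa>" "\<forall>m. g m = G n (\<kappa> m)" using cyclic_seq[OF n g] by blast
  obtain v where v: "v \<in> cvecs {1..n+1}" "v \<noteq> (\<lambda>i. 0)" "z = pt v" using z unfolding PS_iff by blast
  define D where "D = Max {i\<in>{1..n+1}. v i \<noteq> 0}"
  have ne: "{i\<in>{1..n+1}. v i \<noteq> 0} \<noteq> {}" using v(1,2) cvecs_out[OF v(1)] by auto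
  have D: "D \<in> {1..n+1}" "v D \<noteq> 0" using Max_in[OF _ ne] unfolding D_def by auto
  have Dmax: "\<forall>i. D < i \<longrightarrow> v i = 0"
  proof (intro allI impI)
    fix i assume i: "D < i"
    show "v i = 0"
    proof (rule ccontr)
      assume "v i \<noteq> 0"
      then have "i \<in> {i\<in>{1..n+1}. v i \<noteq> 0}" using cvecs_out[OF v(1)] by auto
      then have "i \<le> D" unfolding D_def by (intro Max_ge) auto
      then show False using i by simp
    qed
  qed
  define d0 where "d0 = D - 1"
  have d0: "d0 \<le> n" "d0 + 1 = D" unfolding d0_def using D by auto
  have Dmax': "\<forall>i. d0+1 < i \<longrightarrow> v i = 0" using Dmax d0(2) by simp
  have np: "nn {1..n+1} v > 0" using nn_pos[OF _ v(1,2)] by simp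
  define \<rho> where "\<rho> = cmod (v D) / sqrt (nn {1..n+1} v)"
  have rho: "\<rho> > 0" unfolding \<rho>_def using D np by simp
  have rhov: "\<rho>^2 * nn {1..n+1} v \<le> (cmod (v (d0+1)))^2" unfolding \<rho>_def d0(2) using np
    by (simp add: power_divide)
  have Qy: "1 / (1 + \<epsilon>) \<le> Q {1..n+1} 1 y" if eps: "\<epsilon> > 0" for \<epsilon>
  proof -
    obtain N where N: "\<forall>k::int. N \<le> real_of_int \<bar>k\<bar> \<longrightarrow> (\<forall>w. w \<in> cvecs {1..n+1} \<longrightarrow> (\<forall>i. d0+1 < i \<longrightarrow> w i = 0) \<longrightarrow>
       \<rho>^2 * nn {1..n+1} w \<le> (cmod (w (d0+1)))^2 \<longrightarrow>
       (\<Sum>i\<in>{2..n+1}. (cmod (T n k w i))^2) \<le> \<epsilon> * (cmod (T n k w 1))^2)"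
      using lemU[OF d0(1) rho eps] by blast
    have ev: "eventually (\<lambda>m. \<lceil>N\<rceil> \<le> \<bar>\<kappa> m\<bar>) sequentially" by (rule inj_int_eventually[OF \<kappa>(1)])
    show ?thesis
    proof (rule lim_lower)
      show "(\<lambda>m. dd n (g m z) y) \<longlonglongrightarrow> 0" using conv unfolding mconv_def .
      show "eventually (\<lambda>m. 1 / (1 + \<epsilon>) - dd n (g m z) y \<le> Q {1..n+1} 1 y) sequentially"
        using ev
      proof (rule eventually_mono)
        fix m assume km: "\<lceil>N\<rceil> \<le> \<bar>\<kappa> m\<bar>"
        then have km': "N \<le> real_of_int \<bar>\<kappa> m\<bar>" by linarith
        have gz: "g m z = pt (T n (\<kappa> m) v)" using \<kappa>(2) G_pt[OF v(1,2)] v(3) by simp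
        have S: "(\<Sum>i\<in>{2..n+1}. (cmod (T n (\<kappa> m) v i))^2) \<le> \<epsilon> * (cmod (T n (\<kappa> m) v 1))^2"
          using N km' v(1) Dmax' rhov by blast
        have q1: "1 / (1 + \<epsilon>) \<le> Q {1..n+1} 1 (g m z)" unfolding gz Q_pt
          by (rule qq1_lower[OF T_cvecs T_nonzero[OF v(1,2)] eps S])
        have gzP: "g m z \<in> PP n" unfolding gz PS_iff using T_cvecs T_nonzero[OF v(1,2)] by blast
        have "\<bar>Q {1..n+1} 1 (g m z) - Q {1..n+1} 1 y\<bar> \<le> dd n (g m z) y"
          by (rule Q_lip[OF _ _ gzP y]) auto
        then show "1 / (1 + \<epsilon>) - dd n (g m z) y \<le> Q {1..n+1} 1 y" using q1 by linarith
      qed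
    qed
  qed
  obtain yv where yv: "y = pt yv" using y unfolding PS_iff by blast
  have le1: "Q {1..n+1} 1 y \<le> 1" unfolding yv Q_pt by (rule qq_le1) auto
  have ge1: "Q {1..n+1} 1 y \<ge> 1"
  proof (rule ccontr)
    assume "\<not> ?thesis"
    then have q: "Q {1..n+1} 1 y < 1" by simp
    define \<epsilon> where "\<epsilon> = (1 - Q {1..n+1} 1 y) / 2"
    have eps: "\<epsilon> > 0" unfolding \<epsilon>_def using q by simp
    have "1 / (1 + \<epsilon>) \<le> Q {1..n+1} 1 y" by (rule Qy[OF eps])
    then have "1 \<le> Q {1..n+1} 1 y * (1 + \<epsilon>)" using eps by (simp add: field_simps)
    moreover have "Q {1..n+1} 1 y \<ge> 0" unfolding yv Q_pt by (rule qq_nonneg)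
    moreover have "Q {1..n+1} 1 y * \<epsilon> \<le> 1 * \<epsilon>" by (rule mult_right_mono[OF le1]) (use eps in simp)
    ultimately have "1 \<le> Q {1..n+1} 1 y + \<epsilon>" by (simp add: distrib_left)
    then show False unfolding \<epsilon>_def using q by (simp add: field_simps)
  qed
  show "y \<in> {p \<in> PP n. Q {1..n+1} 1 p = 1}" using y le1 ge1 by simp
qed

lemma Q1_set: "{p \<in> PP n. Q {1..n+1} 1 p = 1} = {pt (e 1)}"
proof (intro equalityI subsetI)
  fix p assume "p \<in> {p \<in> PP n. Q {1..n+1} 1 p = 1}"
  then obtain v where v: "v \<in> cvecs {1..n+1}" "v \<noteq> (\<lambda>i. 0)" "p = pt v" "qq {1..n+1} 1 v = 1"
    unfolding PS_iff by (auto simp: Q_pt)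
  then show "p \<in> {pt (e 1)}" using qq_one_imp[OF v(1,2,4)] by simp
next
  fix p assume "p \<in> {pt (e 1)}"
  then have p: "p = pt (e 1)" by simp
  have e1: "e 1 \<in> cvecs {1..n+1}" by (rule e_cvecs) simp
  have "qq {1..n+1} 1 (e 1) = 1"
  proof -
    have "nn {1..n+1} (e 1) = 1" using nrm_e[of 1 n] unfolding nrm_def by simp
    then show ?thesis unfolding qq_def by (simp add: e_def)
  qed
  then have "Q {1..n+1} 1 p = 1" unfolding p Q_pt .
  moreover have "p \<in> PP n" unfolding p PS_iff using e1 e_nonzero by blast
  ultimately show "p \<in> {p \<in> PP n. Q {1..n+1} 1 p = 1}" by blast
qed

lemma Lambda_eq:
  fixes n :: nat
  assumes n: "n \<ge> 1"
  shows "LimLambda (PP n) (dd n) (GG n) = {pt (e 1)}"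
proof
  show "LimLambda (PP n) (dd n) (GG n) \<subseteq> {pt (e 1)}"
    unfolding LimLambda_def Q1_set[of n, symmetric]
    by (rule mclos_level[OF _ _ Lambda0_sub[OF n]]) auto
  show "{pt (e 1)} \<subseteq> LimLambda (PP n) (dd n) (GG n)" using e1_in_Lambda[OF n] by simp
qed

lemma one_over_lim: "(\<lambda>m. 1 / (real m + 1)) \<longlonglongrightarrow> 0"
  using LIMSEQ_inverse_real_of_nat by (simp add: inverse_eq_divide add.commute)

lemma compact_sep:
  fixes n :: nat
  assumes K: "mcompact (PP n) (dd n) K" and e1: "pt (e 1) \<notin> K"
  shows "\<exists>\<delta>>0. \<forall>x\<in>K. Q {1..n+1} 1 x \<le> 1 - \<delta>"
proof (rule ccontr)
  assume "\<not> ?thesis"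
  then have neg: "\<forall>\<delta>>0. \<exists>x\<in>K. Q {1..n+1} 1 x > 1 - \<delta>" by (auto simp: not_le)
  have "\<forall>m::nat. \<exists>x\<in>K. Q {1..n+1} 1 x > 1 - 1 / (real m + 1)"
  proof
    fix m :: nat
    have "1 / (real m + 1) > 0" by simp
    then show "\<exists>x\<in>K. Q {1..n+1} 1 x > 1 - 1 / (real m + 1)" using neg by blast
  qed
  then obtain s where s: "\<forall>m. s m \<in> K" "\<forall>m. Q {1..n+1} 1 (s m) > 1 - 1 / (real m + 1)" by metis
  have KP: "K \<subseteq> PP n" using K unfolding mcompact_def by blast
  obtain r y where r: "strict_mono r" "y \<in> K" "mconv (dd n) (s \<circ> r) y"
    using K s(1) unfolding mcompact_def by blast
  have yP: "y \<in> PP n" using r(2) KP by blast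
  have "1 \<le> Q {1..n+1} 1 y"
  proof (rule lim_lower)
    show "(\<lambda>m. dd n (s (r m)) y + 1 / (real m + 1)) \<longlonglongrightarrow> 0"
      using r(3) unfolding mconv_def comp_def
      by (intro tendsto_add_zero one_over_lim)
    show "eventually (\<lambda>m. 1 - (dd n (s (r m)) y + 1 / (real m + 1)) \<le> Q {1..n+1} 1 y) sequentially"
    proof (intro always_eventually allI)
      fix m
      have sP: "s (r m) \<in> PP n" using s(1) KP by blast
      have l: "\<bar>Q {1..n+1} 1 (s (r m)) - Q {1..n+1} 1 y\<bar> \<le> dd n (s (r m)) y"
        by (rule Q_lip[OF _ _ sP yP]) auto
      have "m \<le> r m" using seq_suble[OF r(1)] by simp
      then have "1 / (real (r m) + 1) \<le> 1 / (real m + 1)" by (intro divide_left_mono) auto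
      then show "1 - (dd n (s (r m)) y + 1 / (real m + 1)) \<le> Q {1..n+1} 1 y" using l s(2) by smt
    qed
  qed
  moreover have "Q {1..n+1} 1 y \<le> 1"
  proof -
    obtain v where yv: "y = pt v" using yP unfolding PS_iff by blast
    show ?thesis unfolding yv Q_pt by (rule qq_le1) auto
  qed
  ultimately have "y \<in> {p \<in> PP n. Q {1..n+1} 1 p = 1}" using yP by simp
  then have "y = pt (e 1)" unfolding Q1_set by simp
  then show False using r(2) e1 by simp
qed

lemma L2pre_sub:
  fixes n :: nat
  assumes n: "n \<ge> 1"
  shows "{y \<in> PP n. \<exists>K. mcompact (PP n) (dd n) K \<and> K \<subseteq> PP n - LimLambda (PP n) (dd n) (GG n) \<and>
        (\<exists>g k. inj g \<and> (\<forall>m. g m \<in> GG n) \<and> (\<forall>m. k m \<in> K) \<and> mconv (dd n) (\<lambda>m. g m (k m)) y)}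
     \<subseteq> {p \<in> PP n. Q {1..n+1} (n+1) p = 0}"
proof
  fix y assume "y \<in> {y \<in> PP n. \<exists>K. mcompact (PP n) (dd n) K \<and> K \<subseteq> PP n - LimLambda (PP n) (dd n) (GG n) \<and>
        (\<exists>g k. inj g \<and> (\<forall>m. g m \<in> GG n) \<and> (\<forall>m. k m \<in> K) \<and> mconv (dd n) (\<lambda>m. g m (k m)) y)}"
  then obtain K g k where y: "y \<in> PP n" and K: "mcompact (PP n) (dd n) K" "K \<subseteq> PP n - LimLambda (PP n) (dd n) (GG n)"
    and g: "inj g" "\<forall>m. g m \<in> GG n" and k: "\<forall>m. k m \<in> K" and conv: "mconv (dd n) (\<lambda>m. g m (k m)) y"
    by blast
  have e1K: "pt (e 1) \<notin> K" using K(2) e1_in_Lambda[OF n] by blast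
  obtain \<delta> where \<delta>: "\<delta> > 0" "\<forall>x\<in>K. Q {1..n+1} 1 x \<le> 1 - \<delta>" using compact_sep[OF K(1) e1K] by blast
  obtain \<kappa> where \<kappa>: "inj \<kappa>" "\<forall>m. g m = G n (\<kappa> m)" using cyclic_seq[OF n g] by blast
  obtain yv where yv: "y = pt yv" using y unfolding PS_iff by blast
  have q0: "Q {1..n+1} (n+1) y \<ge> 0" unfolding yv Q_pt by (rule qq_nonneg)
  have "Q {1..n+1} (n+1) y = 0"
  proof (rule ccontr)
    assume "Q {1..n+1} (n+1) y \<noteq> 0"
    then have qpos: "Q {1..n+1} (n+1) y > 0" using q0 by simp
    define q where "q = Q {1..n+1} (n+1) y"
    define \<rho> where "\<rho> = sqrt (q / 2)"
    have rho: "\<rho> > 0" unfolding \<rho>_def q_def using qpos by simp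
    have rho2: "\<rho>^2 = q / 2" unfolding \<rho>_def q_def using qpos by simp
    obtain N where N: "\<forall>kk::int. N \<le> real_of_int \<bar>kk\<bar> \<longrightarrow> (\<forall>w. w \<in> cvecs {1..n+1} \<longrightarrow> (\<forall>i. n+1 < i \<longrightarrow> w i = 0) \<longrightarrow>
       \<rho>^2 * nn {1..n+1} w \<le> (cmod (w (n+1)))^2 \<longrightarrow>
       (\<Sum>i\<in>{2..n+1}. (cmod (T n kk w i))^2) \<le> \<delta> * (cmod (T n kk w 1))^2)"
      using lemU[OF order_refl rho \<delta>(1), of n] by blast
    have ev1: "eventually (\<lambda>m. \<lceil>N\<rceil> \<le> \<bar>\<kappa> m\<bar>) sequentially" by (rule inj_int_eventually[OF \<kappa>(1)])
    have ev2: "eventually (\<lambda>m. dd n (g m (k m)) y < q / 2) sequentially"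
      using conv unfolding mconv_def q_def using qpos by (intro order_tendstoD(2)) auto
    obtain m where m1: "\<lceil>N\<rceil> \<le> \<bar>\<kappa> m\<bar>" and m2: "dd n (g m (k m)) y < q / 2"
      using eventually_happens[OF eventually_conj[OF ev1 ev2]] by auto
    have kmP: "k m \<in> PP n" using k K(2) by blast
    obtain u where u: "u \<in> cvecs {1..n+1}" "u \<noteq> (\<lambda>i. 0)" "k m = pt u" using kmP unfolding PS_iff by blast
    define w where "w = T n (\<kappa> m) u"
    have gk: "g m (k m) = pt w" unfolding w_def using \<kappa>(2) G_pt[OF u(1,2)] u(3) by simp
    have wc: "w \<in> cvecs {1..n+1}" "w \<noteq> (\<lambda>i. 0)" unfolding w_def using T_cvecs T_nonzero[OF u(1,2)] by auto
    have gkP: "g m (k m) \<in> PP n" unfolding gk PS_iff using wc by blast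
    have "\<bar>Q {1..n+1} (n+1) (g m (k m)) - Q {1..n+1} (n+1) y\<bar> \<le> dd n (g m (k m)) y"
      by (rule Q_lip[OF _ _ gkP y]) auto
    then have "qq {1..n+1} (n+1) w \<ge> q / 2" using m2 unfolding gk Q_pt q_def by linarith
    then have wq: "\<rho>^2 * nn {1..n+1} w \<le> (cmod (w (n+1)))^2"
      unfolding rho2 qq_def using nn_pos[OF _ wc] by (simp add: field_simps)
    have m1': "N \<le> real_of_int \<bar>- \<kappa> m\<bar>" using m1 by linarith
    have wsup: "\<forall>i. n+1 < i \<longrightarrow> w i = 0" using cvecs_out[OF wc(1)] by auto
    have S: "(\<Sum>i\<in>{2..n+1}. (cmod (T n (- \<kappa> m) w i))^2) \<le> \<delta> * (cmod (T n (- \<kappa> m) w 1))^2"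
      using N m1' wc(1) wsup wq by blast
    have Tw: "T n (- \<kappa> m) w = u" unfolding w_def by (rule T_inv[OF u(1)])
    have "1 / (1 + \<delta>) \<le> qq {1..n+1} 1 u" using qq1_lower[OF u(1,2) \<delta>(1)] S unfolding Tw by blast
    moreover have "qq {1..n+1} 1 u \<le> 1 - \<delta>" using \<delta>(2) k unfolding u(3)[symmetric] Q_pt[symmetric] by blast
    ultimately have "1 / (1 + \<delta>) \<le> 1 - \<delta>" by linarith
    then have "1 \<le> (1 - \<delta>) * (1 + \<delta>)" using \<delta>(1) by (simp add: field_simps)
    then have "\<delta> * \<delta> \<le> 0" by (simp add: algebra_simps)
    then show False using \<delta>(1) by (simp add: mult_le_0_iff)
  qed
  then show "y \<in> {p \<in> PP n. Q {1..n+1} (n+1) p = 0}" using y by simp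
qed

lemma L2_sub_HH:
  fixes n :: nat
  assumes n: "n \<ge> 1"
  shows "LimL2 (PP n) (dd n) (GG n) \<subseteq> HH n"
  unfolding LimL2_def HH_Q by (rule mclos_level[OF _ _ L2pre_sub[OF n]]) auto

lemma Lambda_sub_HH:
  fixes n :: nat
  assumes n: "n \<ge> 1"
  shows "LimLambda (PP n) (dd n) (GG n) \<subseteq> HH n"
  unfolding Lambda_eq[OF n] using HH_ne[OF n] by simp

lemma bw_finite:
  fixes f :: "nat \<Rightarrow> 'i \<Rightarrow> complex"
  assumes J: "finite J" and b: "\<forall>m. \<forall>i\<in>J. cmod (f m i) \<le> B"
  shows "\<exists>r. strict_mono r \<and> (\<forall>i\<in>J. \<exists>l. (\<lambda>m. f (r m) i) \<longlonglongrightarrow> l)"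
  using J b
proof (induction J rule: finite_induct)
  case empty
  show ?case by (rule exI[of _ "\<lambda>x. x"]) (simp add: strict_mono_def)
next
  case (insert j J)
  obtain r1 where r1: "strict_mono r1" "\<forall>i\<in>J. \<exists>l. (\<lambda>m. f (r1 m) i) \<longlonglongrightarrow> l" using insert by auto
  have "bounded (range (\<lambda>m. f (r1 m) j))"
    unfolding bounded_iff using insert.prems by auto
  then obtain l r2 where r2: "strict_mono r2" "((\<lambda>m. f (r1 m) j) \<circ> r2) \<longlonglongrightarrow> l"
    using bounded_imp_convergent_subsequence by blast
  have sm: "strict_mono (r1 \<circ> r2)" using r1(1) r2(1) by (rule strict_mono_o)
  have "\<forall>i\<in>insert j J. \<exists>l. (\<lambda>m. f ((r1 \<circ> r2) m) i) \<longlonglongrightarrow> l"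
  proof
    fix i assume "i \<in> insert j J"
    then show "\<exists>l. (\<lambda>m. f ((r1 \<circ> r2) m) i) \<longlonglongrightarrow> l"
    proof
      assume "i = j" then show ?thesis using r2(2) by (auto simp: comp_def)
    next
      assume "i \<in> J"
      then obtain l' where "(\<lambda>m. f (r1 m) i) \<longlonglongrightarrow> l'" using r1(2) by blast
      then have "((\<lambda>m. f (r1 m) i) \<circ> r2) \<longlonglongrightarrow> l'" using r2(1) by (rule LIMSEQ_subseq_LIMSEQ)
      then show ?thesis by (auto simp: comp_def)
    qed
  qed
  then show ?case using sm by blast
qed

lemma nn_cont:
  fixes U :: "nat \<Rightarrow> 'i \<Rightarrow> complex"
  assumes "\<forall>i\<in>I. (\<lambda>m. U m i) \<longlonglongrightarrow> u i"
  shows "(\<lambda>m. nn I (U m)) \<longlonglongrightarrow> nn I u"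
  unfolding nn_def using assms by (intro tendsto_sum tendsto_power tendsto_norm) auto

lemma hp_e1: "hp n (e 1) u = u 1"
proof -
  have "hp n (e 1) u = (\<Sum>i\<in>{1..n+1}. if i = 1 then u i else 0)" unfolding hp_def e_def
    by (rule sum.cong) auto
  then show ?thesis by simp
qed

lemma l0_compact:
  fixes n :: nat
  assumes n: "n \<ge> 1"
  shows "mcompact (PP n) (dd n) (hyperplane {1..n+1} (e 1))"
  unfolding mcompact_def
proof (intro conjI allI impI)
  show "hyperplane {1..n+1} (e 1) \<subseteq> PP n" unfolding hyperplane_def by blast
  fix s :: "nat \<Rightarrow> (nat \<Rightarrow> complex) set" assume s: "\<forall>m. s m \<in> hyperplane {1..n+1} (e 1)"
  have "\<forall>m::nat. \<exists>u. u \<in> cvecs {1..n+1} \<and> nn {1..n+1} u = 1 \<and> u 1 = 0 \<and> s m = pt u"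
  proof
    fix m
    obtain v where v: "v \<in> cvecs {1..n+1}" "v \<noteq> (\<lambda>i. 0)" "hp n (e 1) v = 0" "s m = pt v"
      using s unfolding hyperplane_eq by blast
    obtain u c where u: "u \<in> cvecs {1..n+1}" "nn {1..n+1} u = 1" "pt u = pt v" "c \<noteq> 0" "u = (\<lambda>i. c * v i)"
      using normalize_vec[OF v(1,2)] by blast
    have "u 1 = 0" using v(3) u(5) unfolding hp_e1 by simp
    then show "\<exists>u. u \<in> cvecs {1..n+1} \<and> nn {1..n+1} u = 1 \<and> u 1 = 0 \<and> s m = pt u"
      using u v(4) by (intro exI[of _ u]) simp
  qed
  then have "\<exists>U. \<forall>m. U m \<in> cvecs {1..n+1} \<and> nn {1..n+1} (U m) = 1 \<and> U m 1 = 0 \<and> s m = pt (U m)"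
    by (rule choice)
  then obtain U :: "nat \<Rightarrow> nat \<Rightarrow> complex" where U': "\<forall>m. U m \<in> cvecs {1..n+1} \<and> nn {1..n+1} (U m) = 1 \<and> U m 1 = 0 \<and> s m = pt (U m)"
    by (elim exE)
  have U: "\<forall>m. U m \<in> cvecs {1..n+1}" "\<forall>m. nn {1..n+1} (U m) = 1" "\<forall>m. U m 1 = 0"
    "\<forall>m. s m = pt (U m)" using U' by auto
  have bnd: "\<forall>m. \<forall>i\<in>{1..n+1}. cmod (U m i) \<le> 1"
  proof (intro allI ballI)
    fix m i
    have "cmod (U m i) \<le> sqrt (nn {1..n+1} (U m))" using U(1) by (intro coord_le_nrm) auto
    then show "cmod (U m i) \<le> 1" using U(2) by simp
  qed
  obtain r where r: "strict_mono r" "\<forall>i\<in>{1..n+1}. \<exists>l. (\<lambda>m. U (r m) i) \<longlonglongrightarrow> l"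
    using bw_finite[OF _ bnd] by blast
  obtain L where L: "\<forall>i\<in>{1..n+1}. (\<lambda>m. U (r m) i) \<longlonglongrightarrow> L i" using bchoice[OF r(2)] by (elim exE)
  define u where "u i = (if i \<in> {1..n+1} then L i else 0)" for i
  have uc: "u \<in> cvecs {1..n+1}" unfolding u_def cvecs_def by auto
  have conv: "(\<lambda>m. U (r m) i) \<longlonglongrightarrow> u i" for i
  proof (cases "i \<in> {1..n+1}")
    case True then show ?thesis using L unfolding u_def by simp
  next
    case False
    have "\<forall>m. U (r m) i = 0"
    proof
      fix m show "U (r m) i = 0" using U(1) cvecs_out[of "U (r m)" "{1..n+1}" i] False by simp
    qed
    moreover have "u i = 0" unfolding u_def using False by (simp only: if_not_P[OF False] if_False)
    ultimately show ?thesis by simp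
  qed
  have "(\<lambda>m. nn {1..n+1} (U (r m))) \<longlonglongrightarrow> nn {1..n+1} u" using conv by (intro nn_cont) auto
  then have nu: "nn {1..n+1} u = 1" using U(2) LIMSEQ_unique[OF _ tendsto_const[of 1]] by simp
  have u1: "u 1 = 0" using conv[of 1] U(3) LIMSEQ_unique[OF _ tendsto_const[of 0]] by simp
  have u0: "u \<noteq> (\<lambda>i. 0)" using nu unfolding nn_def by auto
  have ul: "pt u \<in> hyperplane {1..n+1} (e 1)" unfolding hyperplane_eq using uc u0 u1 hp_e1[of n u]
    by (intro CollectI exI[of _ u]) auto
  have "(\<lambda>m. dd n (s (r m)) (pt u)) \<longlonglongrightarrow> 0"
  proof (rule Lim_null_comparison)
    have "(\<lambda>m. nn {1..n+1} (\<lambda>i. U (r m) i - u i)) \<longlonglongrightarrow> nn {1..n+1} (\<lambda>i. u i - u i)"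
    proof (rule nn_cont)
      show "\<forall>i\<in>{1..n+1}. (\<lambda>m. U (r m) i - u i) \<longlonglongrightarrow> u i - u i"
        using tendsto_diff[OF conv tendsto_const] by blast
    qed
    then have "(\<lambda>m. nn {1..n+1} (\<lambda>i. U (r m) i - u i)) \<longlonglongrightarrow> 0" unfolding nn_def by simp
    then have "(\<lambda>m. sqrt (nn {1..n+1} (\<lambda>i. U (r m) i - u i))) \<longlonglongrightarrow> sqrt 0" by (rule tendsto_real_sqrt)
    then show "(\<lambda>m. 4 * nrm {1..n+1} (\<lambda>i. U (r m) i - u i)) \<longlonglongrightarrow> 0" unfolding nrm_def
      using tendsto_mult_right_zero by auto
    show "\<forall>\<^sub>F m in sequentially. norm (dd n (s (r m)) (pt u)) \<le> 4 * nrm {1..n+1} (\<lambda>i. U (r m) i - u i)"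
    proof (intro always_eventually allI)
      fix m
      have "dd n (s (r m)) (pt u) = Dv {1..n+1} (U (r m)) u" using U(4) pdist_pt by simp
      moreover have "Dv {1..n+1} (U (r m)) u \<le> 4 * nrm {1..n+1} (\<lambda>i. U (r m) i - u i) / nrm {1..n+1} (U (r m))"
        by (rule Dv_bound) (use U(2) nu in auto)
      moreover have "nrm {1..n+1} (U (r m)) = 1" unfolding nrm_def using U(2) by simp
      ultimately show "norm (dd n (s (r m)) (pt u)) \<le> 4 * nrm {1..n+1} (\<lambda>i. U (r m) i - u i)"
        using Dv_nonneg by (simp add: Dv_nonneg)
    qed
  qed
  then show "\<exists>r y. strict_mono r \<and> y \<in> hyperplane {1..n+1} (e 1) \<and> mconv (dd n) (s \<circ> r) y"
    unfolding mconv_def comp_def using r(1) ul by (intro exI[of _ r] exI[of _ "pt u"]) auto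
qed

lemma e1_notin_l0: "pt (e 1) \<notin> hyperplane {1..n+1} (e 1)"
proof
  assume "pt (e 1) \<in> hyperplane {1..n+1} (e 1)"
  then obtain v where v: "pt (e 1) = pt v" "hp n (e 1) v = 0" unfolding hyperplane_eq by blast
  obtain c where c: "c \<noteq> 0" "e 1 = (\<lambda>i. c * v i)" using pt_eqD[OF v(1)] by blast
  have "1 = c * v 1" using fun_cong[OF c(2), of 1] unfolding e_def by simp
  moreover have "v 1 = 0" using v(2) unfolding hp_e1 .
  ultimately show False by simp
qed

lemma HH_sub_L2pre:
  fixes n :: nat
  assumes n: "n \<ge> 1"
  shows "HH n \<subseteq> {y \<in> PP n. \<exists>K. mcompact (PP n) (dd n) K \<and> K \<subseteq> PP n - LimLambda (PP n) (dd n) (GG n) \<and>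
        (\<exists>g k. inj g \<and> (\<forall>m. g m \<in> GG n) \<and> (\<forall>m. k m \<in> K) \<and> mconv (dd n) (\<lambda>m. g m (k m)) y)}"
proof
  fix y assume yH: "y \<in> HH n"
  define K where "K = hyperplane {1..n+1} (e 1)"
  have Kc: "mcompact (PP n) (dd n) K" unfolding K_def by (rule l0_compact[OF n])
  have KP: "K \<subseteq> PP n - LimLambda (PP n) (dd n) (GG n)"
    unfolding Lambda_eq[OF n] K_def using e1_notin_l0[of n] unfolding hyperplane_def by blast
  have a1: "e 1 1 \<noteq> 0" unfolding e_def by simp
  obtain v where v: "v \<in> cvecs {1..n+1}" "v \<noteq> (\<lambda>i. 0)" "v (n+1) = 0" "y = pt v"
    using yH unfolding HH_def by blast
  obtain u c where u: "u \<in> cvecs {1..n+1}" "nn {1..n+1} u = 1" "pt u = pt v" "c \<noteq> 0" "u = (\<lambda>i. c * v i)"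
    using normalize_vec[OF v(1,2)] by blast
  have un: "u (n+1) = 0" using u(5) v(3) by simp
  obtain N0 where N0: "\<forall>m\<ge>N0. \<forall>u. u \<in> cvecs {1..n+1} \<longrightarrow> u (n+1) = 0 \<longrightarrow> nn {1..n+1} u = 1 \<longrightarrow>
     hp n (e 1) (T n (- int m) (e (n+1))) \<noteq> 0 \<and> cmod (sv n (e 1) m u) \<le> 1"
    using part2_ii_est[where a="e 1", OF n a1, of 1] by auto
  define g where "g j = G n (int (N0 + j))" for j
  define k where "k j = pt (vv n (e 1) (N0 + j) u)" for j
  have den: "hp n (e 1) (T n (- int (N0 + j)) (e (n+1))) \<noteq> 0" for j
    using N0[rule_format, OF le_add1 u(1) un u(2)] by blast
  note P = vv_props[OF n u(1) un u(2) den]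
  have ginj: "inj g"
  proof
    fix x y assume "g x = g y"
    then have "int (N0 + x) = int (N0 + y)" using G_inj[OF n] unfolding g_def inj_def by blast
    then show "x = y" by simp
  qed
  have gmem: "\<forall>j. g j \<in> GG n" unfolding g_def cyclic_G by auto
  have kmem: "\<forall>j. k j \<in> K" unfolding k_def K_def hyperplane_eq using P(1-3)
    by (intro allI CollectI exI[of _ "vv n (e 1) (N0 + _) u"]) auto
  have gk: "g j (k j) = pt (T n (int (N0 + j)) (vv n (e 1) (N0 + j) u))" for j
    unfolding g_def k_def by (rule G_pt[OF P(1,2)])
  have conv: "mconv (dd n) (\<lambda>j. g j (k j)) y"
    unfolding mconv_def
  proof (rule LIMSEQ_I)
    fix r :: real assume r: "r > 0"
    obtain N1 where N1: "\<forall>m\<ge>N1. \<forall>u. u \<in> cvecs {1..n+1} \<longrightarrow> u (n+1) = 0 \<longrightarrow> nn {1..n+1} u = 1 \<longrightarrow>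
       hp n (e 1) (T n (- int m) (e (n+1))) \<noteq> 0 \<and> cmod (sv n (e 1) m u) \<le> r / 8"
      using part2_ii_est[where a="e 1", OF n a1, of "r/8"] r by auto
    show "\<exists>no. \<forall>j\<ge>no. norm (dd n (g j (k j)) y - 0) < r"
    proof (intro exI[of _ N1] allI impI)
      fix j assume j: "N1 \<le> j"
      have jj: "N1 \<le> N0 + j" using j by simp
      have s: "cmod (sv n (e 1) (N0 + j) u) \<le> r / 8" using N1[rule_format, OF jj u(1) un u(2)] by blast
      have d: "dd n (g j (k j)) y \<le> 4 * cmod (sv n (e 1) (N0 + j) u)"
        using P(4) unfolding gk v(4) u(3)[symmetric] .
      have "dd n (g j (k j)) y \<ge> 0" unfolding gk v(4) u(3)[symmetric] pdist_pt by (rule Dv_nonneg)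
      then show "norm (dd n (g j (k j)) y - 0) < r" using d s r by simp
    qed
  qed
  have yP: "y \<in> PP n" using yH HH_sub by blast
  show "y \<in> {y \<in> PP n. \<exists>K. mcompact (PP n) (dd n) K \<and> K \<subseteq> PP n - LimLambda (PP n) (dd n) (GG n) \<and>
        (\<exists>g k. inj g \<and> (\<forall>m. g m \<in> GG n) \<and> (\<forall>m. k m \<in> K) \<and> mconv (dd n) (\<lambda>m. g m (k m)) y)}"
    using yP Kc KP ginj gmem kmem conv
    by (intro CollectI conjI exI[of _ K] exI[of _ g] exI[of _ k]) auto
qed

lemma part3:
  fixes n :: nat
  assumes n: "n \<ge> 1"
  shows "KulLim (PP n) (dd n) (GG n) = HH n"
proof
  show "KulLim (PP n) (dd n) (GG n) \<subseteq> HH n"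
    unfolding KulLim_def using Lambda_sub_HH[OF n] L2_sub_HH[OF n] by blast
  have sub: "{y \<in> PP n. \<exists>K. mcompact (PP n) (dd n) K \<and> K \<subseteq> PP n - LimLambda (PP n) (dd n) (GG n) \<and>
        (\<exists>g k. inj g \<and> (\<forall>m. g m \<in> GG n) \<and> (\<forall>m. k m \<in> K) \<and> mconv (dd n) (\<lambda>m. g m (k m)) y)} \<subseteq> PP n"
    by (rule subsetI, erule CollectE, erule conjunct1)
  have "HH n \<subseteq> LimL2 (PP n) (dd n) (GG n)"
    unfolding LimL2_def using HH_sub_L2pre[OF n] mclos_sup[OF sub] by (rule subset_trans)
  then show "HH n \<subseteq> KulLim (PP n) (dd n) (GG n)" unfolding KulLim_def by blast
qed

definition cm :: "nat \<Rightarrow> nat \<Rightarrow> nat set" where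
  "cm n i = {1..n+1} - {i}"

definition sg :: "nat \<Rightarrow> nat \<Rightarrow> nat" where
  "sg i a = (if a + 1 < i then a + 1 else a + 2)"

lemma sorted_cm:
  assumes i: "i \<in> {1..n+1}"
  shows "sorted_list_of_set (cm n i) = [1..<i] @ [Suc i..<n+2]"
proof -
  have fin: "finite (cm n i)" unfolding cm_def by simp
  have set: "set ([1..<i] @ [Suc i..<n+2]) = cm n i" unfolding cm_def using i by auto
  have card: "card (cm n i) = n" unfolding cm_def using i by simp
  have "length ([1..<i] @ [Suc i..<n+2]) = (i - 1) + (n + 2 - Suc i)" by (simp only: length_append length_upt)
  then have len: "length ([1..<i] @ [Suc i..<n+2]) = n" using i by simp
  have sw: "sorted_wrt (<) ([1..<i] @ [Suc i..<n+2])"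
    by (auto simp: sorted_wrt_append)
  have "sorted_wrt (<) ([1..<i] @ [Suc i..<n+2]) \<and> set ([1..<i] @ [Suc i..<n+2]) = cm n i \<and>
      length ([1..<i] @ [Suc i..<n+2]) = card (cm n i)"
    using set sw by (simp only: card len)
  then show ?thesis using sorted_list_of_set_unique[OF fin, of "[1..<i] @ [Suc i..<n+2]"] by blast
qed

lemma sorted_cm_nth:
  assumes i: "i \<in> {1..n+1}" and a: "a < n"
  shows "sorted_list_of_set (cm n i) ! a = sg i a"
proof -
  have "([1..<i] @ [Suc i..<n+2]) ! a = sg i a"
  proof (cases "a < i - 1")
    case True
    then show ?thesis unfolding sg_def by (simp add: nth_append)
  next
    case False
    have "([1..<i] @ [Suc i..<n+2]) ! a = [Suc i..<n+2] ! (a - (i - 1))" using False by (simp add: nth_append)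
    also have "\<dots> = Suc i + (a - (i - 1))"
    proof (rule nth_upt)
      show "Suc i + (a - (i - 1)) < n + 2" using i a False by simp
    qed
    also have "\<dots> = a + 2" using i False by simp
    finally show ?thesis unfolding sg_def using False by simp
  qed
  then show ?thesis using sorted_cm[OF i] by simp
qed

lemma perm_fix_ge:
  fixes p :: "nat \<Rightarrow> nat"
  assumes A: "finite A" and img: "p ` A \<subseteq> A" and inj: "inj_on p A" and ge: "\<forall>a\<in>A. a \<le> p a"
  shows "\<forall>a\<in>A. p a = a"
proof (rule ccontr)
  assume "\<not> ?thesis"
  then obtain a0 where a0: "a0 \<in> A" "a0 < p a0" using ge by force
  have eq: "p ` A = A" by (rule endo_inj_surj[OF A img inj])
  have "sum p A = sum (\<lambda>x. x) (p ` A)" using sum.reindex[OF inj, of "\<lambda>x. x"] by simp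
  also have "\<dots> = sum (\<lambda>x. x) A" unfolding eq ..
  finally have s: "sum p A = sum (\<lambda>x. x) A" .
  have "sum (\<lambda>x. x) A < sum p A" by (rule sum_strict_mono_ex1[OF A]) (use ge a0 in auto)
  then show False using s by simp
qed

lemma perm_fix_le:
  fixes p :: "nat \<Rightarrow> nat"
  assumes A: "finite A" and img: "p ` A \<subseteq> A" and inj: "inj_on p A" and le: "\<forall>a\<in>A. p a \<le> a"
  shows "\<forall>a\<in>A. p a = a"
proof (rule ccontr)
  assume "\<not> ?thesis"
  then obtain a0 where a0: "a0 \<in> A" "p a0 < a0" using le by force
  have eq: "p ` A = A" by (rule endo_inj_surj[OF A img inj])
  have "sum p A = sum (\<lambda>x. x) (p ` A)" using sum.reindex[OF inj, of "\<lambda>x. x"] by simp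
  also have "\<dots> = sum (\<lambda>x. x) A" unfolding eq ..
  finally have s: "sum p A = sum (\<lambda>x. x) A" .
  have "sum p A < sum (\<lambda>x. x) A" by (rule sum_strict_mono_ex1[OF A]) (use le a0 in auto)
  then show False using s by simp
qed

lemma J_val: "x \<in> {1..n+1} \<Longrightarrow> y \<in> {1..n+1} \<Longrightarrow> jordan1 n x y = (if y = x \<or> y = Suc x then 1 else 0)"
  unfolding jordan1_def by simp

lemma sg_range: "i \<in> {1..n+1} \<Longrightarrow> a < n \<Longrightarrow> sg i a \<in> {1..n+1}"
  unfolding sg_def by auto

lemma ldet_cong:
  assumes "\<forall>a<k. \<forall>b<k. M a b = M' a b"
  shows "ldet k M = ldet k M'"
  unfolding ldet_def
proof (rule sum.cong[OF refl])
  fix p assume "p \<in> {p. p permutes {..<k}}"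
  then have p: "p permutes {..<k}" by simp
  have "(\<Prod>i<k. M i (p i)) = (\<Prod>i<k. M' i (p i))"
    using assms permutes_in_image[OF p] by (intro prod.cong) auto
  then show "of_int (sign p) * (\<Prod>i<k. M i (p i)) = of_int (sign p) * (\<Prod>i<k. M' i (p i))" by simp
qed

lemma compound_cm:
  assumes i: "i \<in> {1..n+1}" and j: "j \<in> {1..n+1}"
  shows "compound n (jordan1 n) (cm n i) (cm n j) = ldet n (\<lambda>a b. if sg j b = sg i a \<or> sg j b = Suc (sg i a) then 1 else 0)"
  unfolding compound_def
proof (rule ldet_cong, intro allI impI)
  fix a b assume a: "a < n" and b: "b < n"
  have sa: "sg i a \<in> {1..n+1}" by (rule sg_range[OF i a])
  have sb: "sg j b \<in> {1..n+1}" by (rule sg_range[OF j b])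
  show "jordan1 n (sorted_list_of_set (cm n i) ! a) (sorted_list_of_set (cm n j) ! b) =
    (if sg j b = sg i a \<or> sg j b = Suc (sg i a) then 1 else 0)"
    unfolding sorted_cm_nth[OF i a] sorted_cm_nth[OF j b] J_val[OF sa sb] ..
qed

lemma compound_zero:
  assumes i: "i \<in> {1..n+1}" and j: "j \<in> {1..n+1}" and ij: "i < j"
  shows "compound n (jordan1 n) (cm n i) (cm n j) = 0"
proof -
  define M where "M a b = (if sg j b = sg i a \<or> sg j b = Suc (sg i a) then 1 else (0::complex))" for a b
  have "\<forall>p\<in>{p. p permutes {..<n}}. of_int (sign p) * (\<Prod>a<n. M a (p a)) = 0"
  proof
    fix p assume "p \<in> {p. p permutes {..<n}}"
    then have p: "p permutes {..<n}" by simp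
    have "\<exists>a<n. M a (p a) = 0"
    proof (rule ccontr)
      assume "\<not> ?thesis"
      then have nz: "\<forall>a<n. M a (p a) \<noteq> 0" by simp
      define R where "R = {i-1..<n}"
      define C where "C = {i..<n}"
      have "p ` R \<subseteq> C"
      proof
        fix b assume "b \<in> p ` R"
        then obtain a where a: "a \<in> R" "b = p a" by auto
        have an: "a < n" using a(1) unfolding R_def by simp
        have bn: "p a < n" using permutes_in_image[OF p] an by simp
        have "M a (p a) \<noteq> 0" using nz an by simp
        then have "sg j (p a) = sg i a \<or> sg j (p a) = Suc (sg i a)" unfolding M_def by (simp split: if_splits)
        then have "i \<le> p a" using a(1) ij i unfolding R_def sg_def by (auto split: if_splits)
        then show "b \<in> C" unfolding C_def a(2) using bn by simp
      qed
      moreover have "inj_on p R" using permutes_inj[OF p] by (simp add: inj_on_def inj_def)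
      ultimately have "card R \<le> card C" using card_inj_on_le[of p R C] unfolding C_def by auto
      moreover have "card R = n - (i - 1)" "card C = n - i" unfolding R_def C_def by auto
      moreover have "i \<le> n" using ij j by simp
      ultimately show False using i by simp
    qed
    then obtain a where "a < n" "M a (p a) = 0" by blast
    then have "(\<Prod>a<n. M a (p a)) = 0" by (intro prod_zero) auto
    then show "of_int (sign p) * (\<Prod>a<n. M a (p a)) = 0" by simp
  qed
  then have "ldet n M = 0" unfolding ldet_def by (rule sum.neutral)
  then show ?thesis unfolding compound_cm[OF i j] M_def .
qed

lemma compound_one:
  assumes i: "i \<in> {1..n+1}" and j: "j \<in> {1..n+1}" and ij: "j \<le> i"
  shows "compound n (jordan1 n) (cm n i) (cm n j) = 1"
proof -
  define M where "M a b = (if sg j b = sg i a \<or> sg j b = Suc (sg i a) then 1 else (0::complex))" for a b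
  have only_id: "p = id" if p: "p permutes {..<n}" and nz: "\<forall>a<n. M a (p a) \<noteq> 0" for p
  proof -
    have rel: "sg j (p a) = sg i a \<or> sg j (p a) = Suc (sg i a)" if "a < n" for a
    proof -
      have "M a (p a) \<noteq> 0" using nz that by blast
      then show ?thesis unfolding M_def by (simp split: if_splits)
    qed
    have pn: "p a < n" if "a < n" for a using permutes_in_image[OF p] that by simp
    have injp: "inj_on p X" for X using permutes_inj[OF p] by (simp add: inj_on_def inj_def)
    define TT where "TT = {a. a < n \<and> a + 1 < j}"
    define MM where "MM = {a. a < n \<and> j \<le> a + 1 \<and> a + 1 < i}"
    define BB where "BB = {a. a < n \<and> i \<le> a + 1}"
    have fT: "\<forall>a\<in>TT. p a = a"
    proof (rule perm_fix_ge)
      show "finite TT" unfolding TT_def by simp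
      show "p ` TT \<subseteq> TT"
      proof
        fix b assume "b \<in> p ` TT"
        then obtain a where a: "a \<in> TT" "b = p a" by auto
        have "a < n" using a(1) unfolding TT_def by simp
        then show "b \<in> TT" using rel[of a] pn[of a] a ij unfolding TT_def sg_def by (auto split: if_splits)
      qed
      show "inj_on p TT" by (rule injp)
      show "\<forall>a\<in>TT. a \<le> p a"
      proof
        fix a assume a: "a \<in> TT"
        then have "a < n" unfolding TT_def by simp
        then show "a \<le> p a" using rel[of a] a ij unfolding TT_def sg_def by (auto split: if_splits)
      qed
    qed
    have fM: "\<forall>a\<in>MM. p a = a"
    proof (rule perm_fix_le)
      show "finite MM" unfolding MM_def by simp
      show "p ` MM \<subseteq> MM"
      proof
        fix b assume "b \<in> p ` MM"
        then obtain a where a: "a \<in> MM" "b = p a" by auto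
        have "a < n" using a(1) unfolding MM_def by simp
        then show "b \<in> MM" using rel[of a] pn[of a] a ij unfolding MM_def sg_def by (auto split: if_splits)
      qed
      show "inj_on p MM" by (rule injp)
      show "\<forall>a\<in>MM. p a \<le> a"
      proof
        fix a assume a: "a \<in> MM"
        then have "a < n" unfolding MM_def by simp
        then show "p a \<le> a" using rel[of a] a ij unfolding MM_def sg_def by (auto split: if_splits)
      qed
    qed
    have fB: "\<forall>a\<in>BB. p a = a"
    proof (rule perm_fix_ge)
      show "finite BB" unfolding BB_def by simp
      show "p ` BB \<subseteq> BB"
      proof
        fix b assume "b \<in> p ` BB"
        then obtain a where a: "a \<in> BB" "b = p a" by auto
        have "a < n" using a(1) unfolding BB_def by simp
        then show "b \<in> BB" using rel[of a] pn[of a] a ij unfolding BB_def sg_def by (auto split: if_splits)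
      qed
      show "inj_on p BB" by (rule injp)
      show "\<forall>a\<in>BB. a \<le> p a"
      proof
        fix a assume a: "a \<in> BB"
        then have "a < n" unfolding BB_def by simp
        then show "a \<le> p a" using rel[of a] a ij unfolding BB_def sg_def by (auto split: if_splits)
      qed
    qed
    show "p = id"
    proof
      fix a show "p a = id a"
      proof (cases "a < n")
        case True
        then have "a \<in> TT \<or> a \<in> MM \<or> a \<in> BB" unfolding TT_def MM_def BB_def by auto
        then show ?thesis using fT fM fB by auto
      next
        case False
        then show ?thesis using permutes_not_in[OF p] by simp
      qed
    qed
  qed
  have diag: "M a a = 1" if "a < n" for a using ij unfolding M_def sg_def by auto
  have "ldet n M = (\<Sum>p\<in>{p. p permutes {..<n}}. if p = id then 1 else 0)"
    unfolding ldet_def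
  proof (rule sum.cong[OF refl])
    fix p assume "p \<in> {p. p permutes {..<n}}"
    then have p: "p permutes {..<n}" by simp
    show "of_int (sign p) * (\<Prod>a<n. M a (p a)) = (if p = id then 1 else 0)"
    proof (cases "p = id")
      case True
      then show ?thesis using diag by simp
    next
      case False
      then have "\<exists>a<n. M a (p a) = 0" using only_id[OF p] by blast
      then obtain a where "a < n" "M a (p a) = 0" by blast
      then have "(\<Prod>a<n. M a (p a)) = 0" by (intro prod_zero) auto
      then show ?thesis using False by simp
    qed
  qed
  also have "\<dots> = 1"
  proof -
    have fin: "finite {p. p permutes {..<n::nat}}" by (rule finite_permutations) simp
    show ?thesis using sum.delta[OF fin, of id "\<lambda>_. 1::complex"] by simp
  qed
  finally show ?thesis unfolding compound_cm[OF i j] M_def .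
qed

lemma cm_inj: "inj_on (cm n) {1..n+1}"
  unfolding inj_on_def cm_def by auto

lemma NS_eq: "nsubsets n = cm n ` {1..n+1}"
proof (intro equalityI subsetI)
  fix S assume "S \<in> nsubsets n"
  then have S: "S \<subseteq> {1..n+1}" "card S = n" unfolding nsubsets_def by auto
  have "{1..n+1} - S \<noteq> {}"
  proof
    assume "{1..n+1} - S = {}"
    then have "S = {1..n+1}" using S(1) by auto
    then show False using S(2) by simp
  qed
  then obtain i where i: "i \<in> {1..n+1}" "i \<notin> S" by blast
  have sub: "S \<subseteq> cm n i" unfolding cm_def using S(1) i(2) by auto
  have "card (cm n i) = n" unfolding cm_def using i(1) by simp
  then have "S = cm n i" using card_subset_eq[OF _ sub] S(2) unfolding cm_def by simp
  then show "S \<in> cm n ` {1..n+1}" using i(1) by blast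
next
  fix S assume "S \<in> cm n ` {1..n+1}"
  then obtain i where i: "i \<in> {1..n+1}" "S = cm n i" by blast
  then show "S \<in> nsubsets n" unfolding nsubsets_def cm_def by auto
qed

lemma compound_val:
  "i \<in> {1..n+1} \<Longrightarrow> j \<in> {1..n+1} \<Longrightarrow> compound n (jordan1 n) (cm n i) (cm n j) = (if j \<le> i then 1 else 0)"
  using compound_one compound_zero by auto

lemma mulv_C:
  assumes i: "i \<in> {1..n+1}"
  shows "mulv (nsubsets n) (compound n (jordan1 n)) w (cm n i) = (\<Sum>j\<in>{1..i}. w (cm n j))"
proof -
  have mem: "cm n i \<in> nsubsets n" unfolding NS_eq using i by blast
  have "mulv (nsubsets n) (compound n (jordan1 n)) w (cm n i)
      = (\<Sum>T\<in>cm n ` {1..n+1}. compound n (jordan1 n) (cm n i) T * w T)"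
    unfolding mulv_def using mem NS_eq by simp
  also have "\<dots> = (\<Sum>j\<in>{1..n+1}. compound n (jordan1 n) (cm n i) (cm n j) * w (cm n j))"
    by (rule sum.reindex[OF cm_inj, unfolded comp_def])
  also have "\<dots> = (\<Sum>j\<in>{1..n+1}. if j \<in> {1..i} then w (cm n j) else 0)"
    by (rule sum.cong) (use i compound_val in auto)
  also have "\<dots> = (\<Sum>j\<in>{1..n+1} \<inter> {1..i}. w (cm n j))"
    by (rule sum.inter_restrict[symmetric]) simp
  also have "{1..n+1} \<inter> {1..i} = {1..i}" using i by auto
  finally show ?thesis .
qed

definition dl :: "nat \<Rightarrow> nat set \<Rightarrow> complex" where
  "dl n S = (if S = cm n (n+1) then 1 else 0)"

lemma dl_cvecs: "dl n \<in> cvecs (nsubsets n)"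
  unfolding cvecs_def dl_def NS_eq by auto

lemma dl_nonzero: "dl n \<noteq> (\<lambda>i. 0)"
  unfolding dl_def by (auto dest: fun_cong[of _ _ "cm n (n+1)"])

lemma cm_eq_iff: "i \<in> {1..n+1} \<Longrightarrow> j \<in> {1..n+1} \<Longrightarrow> cm n i = cm n j \<longleftrightarrow> i = j"
  using cm_inj unfolding inj_on_def by auto

lemma mulv_dl: "mulv (nsubsets n) (compound n (jordan1 n)) (dl n) = dl n"
proof
  fix S
  show "mulv (nsubsets n) (compound n (jordan1 n)) (dl n) S = dl n S"
  proof (cases "S \<in> nsubsets n")
    case False
    then show ?thesis using dl_cvecs unfolding mulv_def cvecs_def by auto
  next
    case True
    then obtain i where i: "i \<in> {1..n+1}" "S = cm n i" unfolding NS_eq by blast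
    have "(\<Sum>j\<in>{1..i}. dl n (cm n j)) = (\<Sum>j\<in>{1..i}. if j = n+1 then 1 else 0)"
      by (rule sum.cong) (use i cm_eq_iff in \<open>auto simp: dl_def\<close>)
    also have "\<dots> = (if i = n+1 then 1 else 0)" using i by (simp add: sum.delta)
    also have "\<dots> = dl n (cm n i)" unfolding dl_def using cm_eq_iff[OF i(1), of "n+1"] by simp
    finally show ?thesis unfolding i(2) mulv_C[OF i(1)] .
  qed
qed

lemma pmap_pt_C:
  "pmap (nsubsets n) (compound n (jordan1 n)) (pt v) = pt (mulv (nsubsets n) (compound n (jordan1 n)) v)"
proof -
  obtain c where c: "c \<noteq> 0" "(SOME x. x \<in> pt v) = (\<lambda>i. c * v i)" using some_pt by blast
  show ?thesis unfolding pmap_def c(2) mulv_scale pt_scale[OF c(1)] ..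
qed

lemma part1:
  fixes n :: nat
  shows "\<exists>!p. p \<in> PS (nsubsets n) \<and> pmap (nsubsets n) (compound n (jordan1 n)) p = p"
proof (rule ex1I[of _ "pt (dl n)"])
  show "pt (dl n) \<in> PS (nsubsets n) \<and> pmap (nsubsets n) (compound n (jordan1 n)) (pt (dl n)) = pt (dl n)"
    unfolding PS_iff pmap_pt_C mulv_dl using dl_cvecs dl_nonzero by blast
next
  fix p assume p: "p \<in> PS (nsubsets n) \<and> pmap (nsubsets n) (compound n (jordan1 n)) p = p"
  then obtain v where v: "v \<in> cvecs (nsubsets n)" "v \<noteq> (\<lambda>i. 0)" "p = pt v" unfolding PS_iff by blast
  have "pt (mulv (nsubsets n) (compound n (jordan1 n)) v) = pt v" using p unfolding v(3) pmap_pt_C by simp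
  then obtain lm where lam: "lm \<noteq> 0" "mulv (nsubsets n) (compound n (jordan1 n)) v = (\<lambda>i. lm * v i)"
    using pt_eqD by blast
  define x where "x j = v (cm n j)" for j
  have row: "(\<Sum>j\<in>{1..i}. x j) = lm * x i" if "i \<in> {1..n+1}" for i
    using fun_cong[OF lam(2), of "cm n i"] mulv_C[OF that, of v] unfolding x_def by simp
  have "\<exists>S\<in>nsubsets n. v S \<noteq> 0"
  proof (rule ccontr)
    assume "\<not> ?thesis"
    then have "v = (\<lambda>i. 0)" using v(1) unfolding cvecs_def by (intro ext) blast
    then show False using v(2) by simp
  qed
  then have ex: "\<exists>j. j \<in> {1..n+1} \<and> x j \<noteq> 0" unfolding NS_eq x_def by auto
  define i0 where "i0 = (LEAST j. j \<in> {1..n+1} \<and> x j \<noteq> 0)"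
  have i0: "i0 \<in> {1..n+1}" "x i0 \<noteq> 0" using LeastI_ex[OF ex] unfolding i0_def by auto
  have below: "x j = 0" if "j \<in> {1..n+1}" "j < i0" for j
    using not_less_Least[of j "\<lambda>j. j \<in> {1..n+1} \<and> x j \<noteq> 0"] that unfolding i0_def by auto
  have s0: "(\<Sum>j\<in>{1..i0}. x j) = x i0"
  proof -
    have "(\<Sum>j\<in>{1..i0}. x j) = x i0 + (\<Sum>j\<in>{1..i0} - {i0}. x j)" using i0(1) by (subst sum.remove[of _ i0]) auto
    also have "(\<Sum>j\<in>{1..i0} - {i0}. x j) = 0" using below i0(1) by (intro sum.neutral) auto
    finally show ?thesis by simp
  qed
  have l1: "lm = 1" using row[OF i0(1)] s0 i0(2) by simp
  have i0n: "i0 = n+1"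
  proof (rule ccontr)
    assume "i0 \<noteq> n+1"
    then have i1: "Suc i0 \<in> {1..n+1}" using i0(1) by auto
    have "(\<Sum>j\<in>{1..Suc i0}. x j) = (\<Sum>j\<in>{1..i0}. x j) + x (Suc i0)" by (simp add: sum.cl_ivl_Suc)
    then have "x i0 + x (Suc i0) = x (Suc i0)" using row[OF i1] s0 l1 by simp
    then show False using i0(2) by simp
  qed
  have "v = (\<lambda>S. v (cm n (n+1)) * dl n S)"
  proof
    fix S show "v S = v (cm n (n+1)) * dl n S"
    proof (cases "S \<in> nsubsets n")
      case False then show ?thesis using v(1) dl_cvecs unfolding cvecs_def by auto
    next
      case True
      then obtain j where j: "j \<in> {1..n+1}" "S = cm n j" unfolding NS_eq by blast
      show ?thesis
      proof (cases "j = n+1")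
        case True then show ?thesis using j unfolding dl_def by simp
      next
        case False
        then have "x j = 0" using below[OF j(1)] i0n j(1) by simp
        moreover have "dl n S = 0" unfolding dl_def j(2) using cm_eq_iff[OF j(1), of "n+1"] False by simp
        ultimately show ?thesis unfolding x_def j(2) by simp
      qed
    qed
  qed
  moreover have "v (cm n (n+1)) \<noteq> 0" using i0(2) i0n unfolding x_def by simp
  ultimately show "p = pt (dl n)" unfolding v(3) using pt_scale by metis
qed

theorem mainTheorem11:
  fixes n :: nat and a :: "nat \<Rightarrow> complex"
  assumes "n \<ge> 1"
    and "a \<in> cvecs {1..n+1}" and "a \<noteq> (\<lambda>i. 0)"
    and "pt (e 1) \<notin> hyperplane {1..n+1} a"
  shows "(\<exists>!p. p \<in> PS (nsubsets n) \<and> pmap (nsubsets n) (compound n (jordan1 n)) p = p)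
     \<and> (\<lambda>m. hdist {1..n+1} ((pmap {1..n+1} (jordan1 n) ^^ m) ` hyperplane {1..n+1} a)
                   (pspan {1..n+1} {pt (e k) | k. k \<in> {1..n}})) \<longlonglongrightarrow> 0
     \<and> KulLim (PS {1..n+1}) (pdist {1..n+1}) (cyclic (PS {1..n+1}) (pmap {1..n+1} (jordan1 n)))
         = pspan {1..n+1} {pt (e k) | k. k \<in> {1..n}}"
proof -
  have n: "n \<ge> 1" by fact
  have a1: "a 1 \<noteq> 0"
  proof
    assume a10: "a 1 = 0"
    have e1: "e 1 \<in> cvecs {1..n+1}" by (rule e_cvecs) simp
    have "hp n a (e 1) = 0" using hp_e[of 1 n a] a10 by simp
    then have "pt (e 1) \<in> hyperplane {1..n+1} a" unfolding hyperplane_eq using e1 e_nonzero[of 1]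
      by (intro CollectI exI[of _ "e 1"]) simp
    then show False using assms(4) by simp
  qed
  show ?thesis unfolding pspan_HH
    using part1[of n] part2[where a=a, OF n a1] part3[OF n] by simp
qed

end
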